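(* Assume $n$ is sufficiently large and $2\le r<\sqrt[5]{\ln n}$. Let $H=(V,E)$ be an $n$-uniform hypergraph with $|E|\le 0.01\left(\frac{n}{\ln n}\right)^{\frac{r-1}{r}}r^{n-1}$. If the weights $\sigma(v)$, $v\in V$, are independent and uniform on $[0,1)$, then the probability that the coloring $C^0$ produced by Algorithm 1 has a monochromatic edge is at most $0.04e$.
   Context: Colors are $\{1,\dots,r\}$. Put $p=\frac{r-1}{r}\cdot\frac{\ln(n/\ln n)}{n}$. Partition $[0,1)$ into consecutive half-open intervals $\Delta_1,\delta_1,\Delta_2,\dots,\delta_{r-1},\Delta_r$ (left to right), $\Delta_i=\big[(i-1)(\tfrac{1-p}{r}+\tfrac{p}{r-1}),\ i\tfrac{1-p}{r}+(i-1)\tfrac{p}{r-1}\big)$, $\delta_i=\big[i\tfrac{1-p}{r}+(i-1)\tfrac{p}{r-1},\ i(\tfrac{1-p}{r}+\tfrac{p}{r-1})\big)$. A vertex $v$ belongs to interval $I$ if $\sigma(v)\in I$. Algorithm 1 (for injective $\sigma$, which holds almost surely): every vertex in $\Delta_i$ gets color $i$; then the vertices in $\bigcup_i\delta_i$ are processed in increasing order of weight, and $v\in\delta_i$ gets color $i$ unless some edge containing $v$ has all its other vertices already colored $i$, in which case $v$ gets color $i+1$. The resulting coloring is $C^0$. An edge is monochromatic if all its vertices have the same color. *)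

theory Defs
  imports "HOL-Probability.Probability"
begin

definition pcol :: "nat \<Rightarrow> nat \<Rightarrow> real" where
  "pcol r n = (real r - 1) / real r * ln (real n / ln (real n)) / real n"

text \<open>Interval Delta_i, i = 1..r (left-closed, right-open).\<close>
definition BigI :: "nat \<Rightarrow> nat \<Rightarrow> nat \<Rightarrow> real set" where
  "BigI r n i = (let p = pcol r n; a = (1 - p) / real r; b = p / (real r - 1) in
     {(real i - 1) * (a + b) ..< real i * a + (real i - 1) * b})"

text \<open>Interval delta_i, i = 1..r-1 (left-closed, right-open).\<close>
definition SmallI :: "nat \<Rightarrow> nat \<Rightarrow> nat \<Rightarrow> real set" where
  "SmallI r n i = (let p = pcol r n; a = (1 - p) / real r; b = p / (real r - 1) in
     {real i * a + (real i - 1) * b ..< real i * (a + b)})"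

text \<open>Vertex u is already colored at the moment vertex v (in some delta_i) is processed:
  either u lies in some Delta_j (colored at the start), or u lies in some delta_j
  and has smaller weight than v.\<close>
definition already_colored :: "nat \<Rightarrow> nat \<Rightarrow> ('a \<Rightarrow> real) \<Rightarrow> 'a \<Rightarrow> 'a \<Rightarrow> bool" where
  "already_colored r n \<sigma> v u \<longleftrightarrow>
     (\<exists>j\<in>{1..r}. \<sigma> u \<in> BigI r n j) \<or>
     ((\<exists>j\<in>{1..<r}. \<sigma> u \<in> SmallI r n j) \<and> \<sigma> u < \<sigma> v)"

text \<open>c is the output of Algorithm 1 on hypergraph (V,E) with weights sigma
  (colors are 1..r; c is 0 outside V).\<close>
definition alg1_output :: "nat \<Rightarrow> nat \<Rightarrow> 'a set \<Rightarrow> 'a set set \<Rightarrow> ('a \<Rightarrow> real) \<Rightarrow> ('a \<Rightarrow> nat) \<Rightarrow> bool" where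
  "alg1_output r n V E \<sigma> c \<longleftrightarrow>
     (\<forall>v\<in>V. \<forall>i\<in>{1..r}. \<sigma> v \<in> BigI r n i \<longrightarrow> c v = i) \<and>
     (\<forall>v\<in>V. \<forall>i\<in>{1..<r}. \<sigma> v \<in> SmallI r n i \<longrightarrow>
        c v = (if \<exists>e\<in>E. v \<in> e \<and> (\<forall>u\<in>e - {v}. already_colored r n \<sigma> v u \<and> c u = i)
               then i + 1 else i)) \<and>
     (\<forall>v. v \<notin> V \<longrightarrow> c v = 0)"

text \<open>The coloring C^0 (meaningful for injective sigma, where it is unique).\<close>
definition C0 :: "nat \<Rightarrow> nat \<Rightarrow> 'a set \<Rightarrow> 'a set set \<Rightarrow> ('a \<Rightarrow> real) \<Rightarrow> 'a \<Rightarrow> nat" where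
  "C0 r n V E \<sigma> = (THE c. alg1_output r n V E \<sigma> c)"

definition has_mono_edge :: "'a set set \<Rightarrow> ('a \<Rightarrow> nat) \<Rightarrow> bool" where
  "has_mono_edge E c \<longleftrightarrow> (\<exists>e\<in>E. \<exists>k. \<forall>u\<in>e. c u = k)"

definition weight_space :: "'a set \<Rightarrow> ('a \<Rightarrow> real) measure" where
  "weight_space V = PiM V (\<lambda>_. uniform_measure lborel {0..<1::real})"

end

theory Submission
  imports Defs
begin

definition aa :: "nat \<Rightarrow> nat \<Rightarrow> real" where "aa r n = (1 - pcol r n) / real r"
definition bb :: "nat \<Rightarrow> nat \<Rightarrow> real" where "bb r n = pcol r n / (real r - 1)"

lemma BigI_eq: "BigI r n i = {(real i - 1) * (aa r n + bb r n) ..< (real i - 1) * (aa r n + bb r n) + aa r n}"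
  unfolding BigI_def Let_def aa_def[symmetric] bb_def[symmetric] by (simp add: algebra_simps)

lemma SmallI_eq: "SmallI r n i = {(real i - 1) * (aa r n + bb r n) + aa r n ..< real i * (aa r n + bb r n)}"
  unfolding SmallI_def Let_def aa_def[symmetric] bb_def[symmetric] by (simp add: algebra_simps)

locale params =
  fixes r n :: nat
  assumes r2: "2 \<le> r" and p_pos: "0 < pcol r n" and p_lt: "pcol r n < 1"
begin

abbreviation "a \<equiv> aa r n"
abbreviation "b \<equiv> bb r n"
abbreviation "T \<equiv> aa r n + bb r n"

lemma a_pos: "a > 0" using r2 p_lt by (simp add: aa_def)
lemma b_pos: "b > 0" using r2 p_pos by (simp add: bb_def)
lemma T_pos: "T > 0" using a_pos b_pos by simp
lemma sum1: "real r * a + (real r - 1) * b = 1"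
  using r2 by (simp add: aa_def bb_def field_simps)

lemma multT_mono: "i \<le> j \<Longrightarrow> real i * T \<le> real j * T"
  using T_pos by (simp add: mult_right_mono)

lemma BigI_mem: "x \<in> BigI r n i \<longleftrightarrow> real i * T - T \<le> x \<and> x < real i * T - T + a"
  by (simp add: BigI_eq algebra_simps)
lemma SmallI_mem: "x \<in> SmallI r n i \<longleftrightarrow> real i * T - T + a \<le> x \<and> x < real i * T"
  by (simp add: SmallI_eq algebra_simps)

lemma lt_helper: "i < j \<Longrightarrow> real i * T \<le> real j * T - T"
proof -
  assume "i < j" then have "Suc i \<le> j" by simp
  from multT_mono[OF this] show ?thesis by (simp add: algebra_simps)
qed

lemma Big_Big_unique: "x \<in> BigI r n i \<Longrightarrow> x \<in> BigI r n j \<Longrightarrow> i = j"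
  using lt_helper[of i j] lt_helper[of j i] b_pos
  by (cases i j rule: linorder_cases) (auto simp: BigI_mem)
lemma Small_Small_unique: "x \<in> SmallI r n i \<Longrightarrow> x \<in> SmallI r n j \<Longrightarrow> i = j"
  using lt_helper[of i j] lt_helper[of j i] b_pos a_pos
  by (cases i j rule: linorder_cases) (auto simp: SmallI_mem)
lemma Big_Small_disj: "x \<in> BigI r n i \<Longrightarrow> x \<in> SmallI r n j \<Longrightarrow> False"
  using lt_helper[of i j] lt_helper[of j i] b_pos a_pos
  by (cases i j rule: linorder_cases) (auto simp: SmallI_mem BigI_mem)

lemma Small_lt_Big: "x \<in> SmallI r n i \<Longrightarrow> y \<in> BigI r n j \<Longrightarrow> i < j \<Longrightarrow> x < y"
  using lt_helper[of i j] by (auto simp: SmallI_mem BigI_mem)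
lemma Big_lt_Small: "x \<in> BigI r n i \<Longrightarrow> y \<in> SmallI r n j \<Longrightarrow> i \<le> j \<Longrightarrow> x < y"
proof -
  assume h: "x \<in> BigI r n i" "y \<in> SmallI r n j" "i \<le> j"
  have "real i * T \<le> real j * T" using multT_mono h(3) .
  with h(1,2) show ?thesis unfolding SmallI_mem BigI_mem by linarith
qed
lemma Small_lt_Small: "x \<in> SmallI r n i \<Longrightarrow> y \<in> SmallI r n j \<Longrightarrow> i < j \<Longrightarrow> x < y"
  using lt_helper[of i j] a_pos by (auto simp: SmallI_mem)
lemma Big_lt_Big: "x \<in> BigI r n i \<Longrightarrow> y \<in> BigI r n j \<Longrightarrow> i < j \<Longrightarrow> x < y"
  using lt_helper[of i j] b_pos by (auto simp: BigI_mem)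

lemma classify:
  assumes "0 \<le> x" "x < 1"
  shows "(\<exists>i\<in>{1..r}. x \<in> BigI r n i) \<or> (\<exists>i\<in>{1..<r}. x \<in> SmallI r n i)"
proof -
  define k where "k = nat \<lfloor>x / T\<rfloor>"
  have fl0: "\<lfloor>x / T\<rfloor> \<ge> 0" using assms T_pos by simp
  have k1: "real k * T \<le> x"
  proof -
    have "real k = of_int \<lfloor>x / T\<rfloor>" using fl0 by (simp add: k_def)
    also have "\<dots> \<le> x / T" by simp
    finally show ?thesis using T_pos by (simp add: field_simps)
  qed
  have k2: "x < real k * T + T"
  proof -
    have "x / T < of_int \<lfloor>x / T\<rfloor> + 1" by linarith
    also have "of_int \<lfloor>x / T\<rfloor> = real k" using fl0 by (simp add: k_def)
    finally show ?thesis using T_pos by (simp add: field_simps)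
  qed
  have rT: "real r * T = 1 + b" using sum1 by (simp add: algebra_simps)
  have kr: "k < r"
  proof (rule ccontr)
    assume "\<not> k < r" then have "r \<le> k" by simp
    from multT_mono[OF this] have "real r * T \<le> real k * T" .
    then show False using k1 rT b_pos assms by linarith
  qed
  show ?thesis
  proof (cases "x < real k * T + a")
    case True
    then have "x \<in> BigI r n (Suc k)" using k1 by (simp add: BigI_mem algebra_simps)
    then show ?thesis using kr by auto
  next
    case False
    show ?thesis
    proof (cases "Suc k = r")
      case True
      then have "real k = real r - 1" by auto
      then have "real k * T + a = (real r - 1) * T + a" by simp
      also have "\<dots> = 1" using sum1 by (simp add: algebra_simps)
      finally have "real k * T + a = 1" .
      then show ?thesis using False assms by linarith
    next
      case F2: False
      then have "x \<in> SmallI r n (Suc k)" using False k2 by (simp add: SmallI_mem algebra_simps)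
      then show ?thesis using kr F2 by auto
    qed
  qed
qed

end

definition stepc :: "nat \<Rightarrow> nat \<Rightarrow> nat set \<Rightarrow> nat set set \<Rightarrow> (nat \<Rightarrow> real) \<Rightarrow> (nat \<Rightarrow> nat) \<Rightarrow> nat \<Rightarrow> nat" where
"stepc r n V E \<sigma> c v = (if v \<notin> V then 0
   else if \<exists>i\<in>{1..r}. \<sigma> v \<in> BigI r n i then (SOME i. i \<in> {1..r} \<and> \<sigma> v \<in> BigI r n i)
   else if \<exists>i\<in>{1..<r}. \<sigma> v \<in> SmallI r n i then
     (let i = (SOME i. i \<in> {1..<r} \<and> \<sigma> v \<in> SmallI r n i) in
       if \<exists>e\<in>E. v \<in> e \<and> (\<forall>u\<in>e - {v}. already_colored r n \<sigma> v u \<and> c u = i) then i + 1 else i)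
   else 0)"

primrec colf :: "nat \<Rightarrow> nat \<Rightarrow> nat set \<Rightarrow> nat set set \<Rightarrow> (nat \<Rightarrow> real) \<Rightarrow> nat \<Rightarrow> nat \<Rightarrow> nat" where
  "colf r n V E \<sigma> 0 = stepc r n V E \<sigma> (\<lambda>_. 0)"
| "colf r n V E \<sigma> (Suc k) = stepc r n V E \<sigma> (colf r n V E \<sigma> k)"

definition rank :: "nat set \<Rightarrow> (nat \<Rightarrow> real) \<Rightarrow> nat \<Rightarrow> nat" where
  "rank V \<sigma> v = card {u \<in> V. \<sigma> u < \<sigma> v}"

lemma rank_less:
  assumes "finite V" "u \<in> V" "\<sigma> u < \<sigma> v"
  shows "rank V \<sigma> u < rank V \<sigma> v"
  unfolding rank_def
proof (rule psubset_card_mono)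
  show "finite {u \<in> V. \<sigma> u < \<sigma> v}" using assms by simp
  show "{ua \<in> V. \<sigma> ua < \<sigma> u} \<subset> {u \<in> V. \<sigma> u < \<sigma> v}" using assms by auto
qed

lemma rank_lt_card:
  assumes "finite V" "v \<in> V"
  shows "rank V \<sigma> v < card V"
  unfolding rank_def
  by (rule psubset_card_mono) (use assms in auto)

context params
begin

lemma big_idx:
  assumes "i \<in> {1..r}" "x \<in> BigI r n i"
  shows "(SOME i. i \<in> {1..r} \<and> x \<in> BigI r n i) = i"
proof (rule some_equality)
  show "i \<in> {1..r} \<and> x \<in> BigI r n i" using assms by blast
  fix j assume "j \<in> {1..r} \<and> x \<in> BigI r n j"
  then show "j = i" using Big_Big_unique[of x j i] assms(2) by blast
qed

lemma small_idx:
  assumes "i \<in> {1..<r}" "x \<in> SmallI r n i"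
  shows "(SOME i. i \<in> {1..<r} \<and> x \<in> SmallI r n i) = i"
proof (rule some_equality)
  show "i \<in> {1..<r} \<and> x \<in> SmallI r n i" using assms by blast
  fix j assume "j \<in> {1..<r} \<and> x \<in> SmallI r n j"
  then show "j = i" using Small_Small_unique[of x j i] assms(2) by blast
qed

lemma stepc_big:
  assumes "v \<in> V" "i \<in> {1..r}" "\<sigma> v \<in> BigI r n i"
  shows "stepc r n V E \<sigma> c v = i"
proof -
  have ex: "\<exists>i\<in>{1..r}. \<sigma> v \<in> BigI r n i" using assms(2,3) by blast
  have "stepc r n V E \<sigma> c v = (SOME i. i \<in> {1..r} \<and> \<sigma> v \<in> BigI r n i)"
    unfolding stepc_def using assms(1) ex by (simp only: if_True if_False simp_thms)
  then show ?thesis using big_idx[OF assms(2,3)] by simp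
qed

lemma stepc_small:
  assumes "v \<in> V" "i \<in> {1..<r}" "\<sigma> v \<in> SmallI r n i"
  shows "stepc r n V E \<sigma> c v =
     (if \<exists>e\<in>E. v \<in> e \<and> (\<forall>u\<in>e - {v}. already_colored r n \<sigma> v u \<and> c u = i) then i + 1 else i)"
proof -
  have nb: "\<not> (\<exists>i\<in>{1..r}. \<sigma> v \<in> BigI r n i)" using assms Big_Small_disj by blast
  have ex: "\<exists>i\<in>{1..<r}. \<sigma> v \<in> SmallI r n i" using assms(2,3) by blast
  have "stepc r n V E \<sigma> c v = (let i = (SOME i. i \<in> {1..<r} \<and> \<sigma> v \<in> SmallI r n i) in
       if \<exists>e\<in>E. v \<in> e \<and> (\<forall>u\<in>e - {v}. already_colored r n \<sigma> v u \<and> c u = i) then i + 1 else i)"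
    unfolding stepc_def using assms(1) ex nb by (simp only: if_True if_False simp_thms)
  then show ?thesis unfolding small_idx[OF assms(2,3)] Let_def .
qed

lemma colf_big:
  assumes "v \<in> V" "i \<in> {1..r}" "\<sigma> v \<in> BigI r n i"
  shows "colf r n V E \<sigma> k v = i"
  using stepc_big[of v V i \<sigma> E] assms by (cases k) simp_all

lemma stepc_cong:
  assumes "\<And>u. already_colored r n \<sigma> v u \<Longrightarrow> c1 u = c2 u"
  shows "stepc r n V E \<sigma> c1 v = stepc r n V E \<sigma> c2 v"
proof -
  have "(already_colored r n \<sigma> v u \<and> c1 u = i) = (already_colored r n \<sigma> v u \<and> c2 u = i)" for u i
    using assms by auto
  then show ?thesis unfolding stepc_def Let_def by (simp only:)
qed

lemma colf_out: "u \<notin> V \<Longrightarrow> colf r n V E \<sigma> k u = 0"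
  by (cases k) (simp_all add: stepc_def)

lemma colf_stable:
  assumes V: "finite V" and EV: "\<forall>e\<in>E. e \<subseteq> V"
  shows "v \<in> V \<Longrightarrow> rank V \<sigma> v < k \<Longrightarrow> rank V \<sigma> v < k' \<Longrightarrow> colf r n V E \<sigma> k v = colf r n V E \<sigma> k' v"
proof (induction "rank V \<sigma> v" arbitrary: v k k' rule: less_induct)
  case less
  obtain k0 where k0: "k = Suc k0" using less.prems by (cases k) auto
  obtain k1 where k1: "k' = Suc k1" using less.prems by (cases k') auto
  have "stepc r n V E \<sigma> (colf r n V E \<sigma> k0) v = stepc r n V E \<sigma> (colf r n V E \<sigma> k1) v"
  proof (rule stepc_cong)
    fix u assume ac: "already_colored r n \<sigma> v u"
    show "colf r n V E \<sigma> k0 u = colf r n V E \<sigma> k1 u"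
    proof (cases "u \<in> V")
      case False
      then show ?thesis by (simp add: colf_out)
    next
      case uV: True
      from ac show ?thesis unfolding already_colored_def
      proof (elim disjE conjE bexE)
        fix j assume "j \<in> {1..r}" "\<sigma> u \<in> BigI r n j"
        then show ?thesis using colf_big[of u V j \<sigma> E] uV by simp
      next
        fix j assume "\<sigma> u < \<sigma> v"
        then have ru: "rank V \<sigma> u < rank V \<sigma> v" using rank_less V uV by blast
        have "rank V \<sigma> u < k0" "rank V \<sigma> u < k1" using ru less.prems k0 k1 by simp_all
        then show ?thesis using less.hyps[OF ru uV] by blast
      qed
    qed
  qed
  then show ?case using k0 k1 by simp
qed

lemma alg_big: "alg1_output r n V E \<sigma> c \<Longrightarrow> v \<in> V \<Longrightarrow> i \<in> {1..r} \<Longrightarrow> \<sigma> v \<in> BigI r n i \<Longrightarrow> c v = i"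
  unfolding alg1_output_def by blast
lemma alg_small: "alg1_output r n V E \<sigma> c \<Longrightarrow> v \<in> V \<Longrightarrow> i \<in> {1..<r} \<Longrightarrow> \<sigma> v \<in> SmallI r n i \<Longrightarrow>
   c v = (if \<exists>e\<in>E. v \<in> e \<and> (\<forall>u\<in>e - {v}. already_colored r n \<sigma> v u \<and> c u = i) then i + 1 else i)"
  unfolding alg1_output_def by blast
lemma alg_out: "alg1_output r n V E \<sigma> c \<Longrightarrow> v \<notin> V \<Longrightarrow> c v = 0"
  unfolding alg1_output_def by blast

lemma C0_spec:
  assumes V: "finite (V::nat set)" and EV: "\<forall>e\<in>E. e \<subseteq> V" and sv: "\<forall>v\<in>V. 0 \<le> \<sigma> v \<and> \<sigma> v < 1"
  shows "alg1_output r n V E \<sigma> (C0 r n V E \<sigma>)"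
proof -
  define c where "c = colf r n V E \<sigma> (card V)"
  have ex: "alg1_output r n V E \<sigma> c"
    unfolding alg1_output_def
  proof (intro conjI ballI impI allI)
    fix v i assume "v \<in> V" "i \<in> {1..r}" "\<sigma> v \<in> BigI r n i"
    then show "c v = i" unfolding c_def using colf_big by blast
  next
    fix v i assume vV: "v \<in> V" and i: "i \<in> {1..<r}" and sm: "\<sigma> v \<in> SmallI r n i"
    have "card V > 0" using vV V card_gt_0_iff by blast
    then have cV: "card V = Suc (card V - 1)" by simp
    have rv: "rank V \<sigma> v < card V" using rank_lt_card V vV by blast
    have "c v = stepc r n V E \<sigma> (colf r n V E \<sigma> (card V - 1)) v"
      unfolding c_def by (subst cV) simp
    also have "\<dots> = stepc r n V E \<sigma> c v"
    proof (rule stepc_cong)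
      fix u assume ac: "already_colored r n \<sigma> v u"
      show "colf r n V E \<sigma> (card V - 1) u = c u"
      proof (cases "u \<in> V")
        case False
        then show ?thesis unfolding c_def by (simp add: colf_out)
      next
        case uV: True
        from ac show ?thesis unfolding already_colored_def
        proof (elim disjE conjE bexE)
          fix j assume "j \<in> {1..r}" "\<sigma> u \<in> BigI r n j"
          then show ?thesis using colf_big[of u V j \<sigma> E] uV unfolding c_def by simp
        next
          fix j assume "\<sigma> u < \<sigma> v"
          then have "rank V \<sigma> u < rank V \<sigma> v" using rank_less V uV by blast
          then have "rank V \<sigma> u < card V - 1" "rank V \<sigma> u < card V" using rv by simp_all
          then show ?thesis unfolding c_def using colf_stable[OF V EV uV] by blast
        qed
      qed
    qed
    also have "\<dots> = (if \<exists>e\<in>E. v \<in> e \<and> (\<forall>u\<in>e - {v}. already_colored r n \<sigma> v u \<and> c u = i) then i + 1 else i)"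
      using stepc_small[of v V i \<sigma> E c] vV i sm by blast
    finally show "c v = (if \<exists>e\<in>E. v \<in> e \<and> (\<forall>u\<in>e - {v}. already_colored r n \<sigma> v u \<and> c u = i) then i + 1 else i)" .
  next
    fix v assume "v \<notin> V"
    then show "c v = 0" unfolding c_def by (simp add: colf_out)
  qed
  have uniq: "c' = c" if c': "alg1_output r n V E \<sigma> c'" for c'
  proof -
    have "v \<in> V \<Longrightarrow> c' v = c v" for v
    proof (induction "rank V \<sigma> v" arbitrary: v rule: less_induct)
      case less
      have eq: "c' u = c u" if "already_colored r n \<sigma> v u" "u \<in> V" for u
        using that(1) unfolding already_colored_def
      proof (elim disjE conjE bexE)
        fix j assume "j \<in> {1..r}" "\<sigma> u \<in> BigI r n j"
        then show ?thesis using alg_big[of V E \<sigma> c' u j] alg_big[of V E \<sigma> c u j] c' ex that(2) by simp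
      next
        fix j assume "\<sigma> u < \<sigma> v"
        then have "rank V \<sigma> u < rank V \<sigma> v" using rank_less V that(2) by blast
        then show ?thesis using less.hyps that(2) by blast
      qed
      have "(\<exists>i\<in>{1..r}. \<sigma> v \<in> BigI r n i) \<or> (\<exists>i\<in>{1..<r}. \<sigma> v \<in> SmallI r n i)"
        using classify[of "\<sigma> v"] sv less.prems by blast
      then show ?case
      proof (elim disjE bexE)
        fix i assume "i \<in> {1..r}" "\<sigma> v \<in> BigI r n i"
        then show ?thesis using alg_big[of V E \<sigma> c' v i] alg_big[of V E \<sigma> c v i] c' ex less.prems by simp
      next
        fix i assume i: "i \<in> {1..<r}" and sm: "\<sigma> v \<in> SmallI r n i"
        have "c' v = (if \<exists>e\<in>E. v \<in> e \<and> (\<forall>u\<in>e - {v}. already_colored r n \<sigma> v u \<and> c' u = i) then i + 1 else i)"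
          using alg_small[of V E \<sigma> c' v i] c' less.prems i sm by blast
        also have "\<dots> = (if \<exists>e\<in>E. v \<in> e \<and> (\<forall>u\<in>e - {v}. already_colored r n \<sigma> v u \<and> c u = i) then i + 1 else i)"
        proof -
          have eqv: "(already_colored r n \<sigma> v u \<and> c' u = i) = (already_colored r n \<sigma> v u \<and> c u = i)"
            if "u \<in> V" for u using eq[OF _ that] by auto
          have "(\<exists>e\<in>E. v \<in> e \<and> (\<forall>u\<in>e - {v}. already_colored r n \<sigma> v u \<and> c' u = i)) =
                (\<exists>e\<in>E. v \<in> e \<and> (\<forall>u\<in>e - {v}. already_colored r n \<sigma> v u \<and> c u = i))"
          proof (rule bex_cong[OF refl], rule conj_cong[OF refl], rule ball_cong[OF refl])
            fix e u assume "e \<in> E" "u \<in> e - {v}"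
            then have "u \<in> V" using EV by blast
            then show "(already_colored r n \<sigma> v u \<and> c' u = i) = (already_colored r n \<sigma> v u \<and> c u = i)" by (rule eqv)
          qed
          then show ?thesis by (simp only:)
        qed
        also have "\<dots> = c v"
          using alg_small[of V E \<sigma> c v i] ex less.prems i sm by simp
        finally show ?thesis .
      qed
    qed
    moreover have "v \<notin> V \<Longrightarrow> c' v = c v" for v using alg_out[of V E \<sigma> c' v] alg_out[of V E \<sigma> c v] c' ex by simp
    ultimately show ?thesis by blast
  qed
  have "\<exists>!c. alg1_output r n V E \<sigma> c" using ex uniq by blast
  then show ?thesis unfolding C0_def by (rule theI')
qed

end

lemma fin_argmin:
  fixes g :: "'b \<Rightarrow> real"
  assumes "finite S" "S \<noteq> {}"
  shows "\<exists>x\<in>S. \<forall>y\<in>S. g x \<le> g y"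
proof -
  have "Min (g ` S) \<in> g ` S" using assms by simp
  then obtain x where "x \<in> S" "g x = Min (g ` S)" by auto
  moreover have "\<forall>y\<in>S. Min (g ` S) \<le> g y" using assms by simp
  ultimately show ?thesis by (intro bexI[of _ x]) simp_all
qed

lemma fin_argmax:
  fixes g :: "'b \<Rightarrow> real"
  assumes "finite S" "S \<noteq> {}"
  shows "\<exists>x\<in>S. \<forall>y\<in>S. g y \<le> g x"
proof -
  have "Max (g ` S) \<in> g ` S" using assms by simp
  then obtain x where "x \<in> S" "g x = Max (g ` S)" by auto
  moreover have "\<forall>y\<in>S. g y \<le> Max (g ` S)" using assms by simp
  ultimately show ?thesis by (intro bexI[of _ x]) simp_all
qed

definition chainP :: "nat \<Rightarrow> nat \<Rightarrow> nat set set \<Rightarrow> (nat \<Rightarrow> real) \<Rightarrow> nat \<Rightarrow> nat \<Rightarrow> (nat \<Rightarrow> nat set) \<Rightarrow> (nat \<Rightarrow> nat) \<Rightarrow> bool" where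
  "chainP r n E \<sigma> k l es W \<longleftrightarrow>
    (\<forall>j\<in>{0..l}. es j \<in> E) \<and>
    (\<forall>j\<in>{1..l}. W j \<in> es (j - 1) \<and> W j \<in> es j \<and> \<sigma> (W j) \<in> SmallI r n (k - j)) \<and>
    (\<forall>u\<in>es 0 - {W 1}. \<sigma> (W 1) < \<sigma> u \<and> \<sigma> u < real k * (aa r n + bb r n) - (aa r n + bb r n) + aa r n) \<and>
    (\<forall>j\<in>{1..<l}. \<forall>u\<in>es j - {W j, W (Suc j)}. \<sigma> (W (Suc j)) < \<sigma> u \<and> \<sigma> u < \<sigma> (W j)) \<and>
    (\<forall>u\<in>es l - {W l}. real (k - l) * (aa r n + bb r n) - (aa r n + bb r n) \<le> \<sigma> u \<and> \<sigma> u < \<sigma> (W l))"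

locale colsetup = params +
  fixes V :: "nat set" and E :: "nat set set" and \<sigma> :: "nat \<Rightarrow> real" and c :: "nat \<Rightarrow> nat"
  assumes finV: "finite V" and EV: "\<forall>e\<in>E. e \<subseteq> V"
    and sv: "\<forall>v\<in>V. 0 \<le> \<sigma> v \<and> \<sigma> v < 1" and injs: "inj_on \<sigma> V"
    and alg: "alg1_output r n V E \<sigma> c"
begin

lemma col_range:
  assumes "v \<in> V" "c v = k"
  shows "(\<sigma> v \<in> BigI r n k \<and> k \<in> {1..r}) \<or> (\<sigma> v \<in> SmallI r n k \<and> k \<in> {1..<r}) \<or>
         (2 \<le> k \<and> \<sigma> v \<in> SmallI r n (k - 1) \<and> k - 1 \<in> {1..<r})"
proof -
  have "(\<exists>i\<in>{1..r}. \<sigma> v \<in> BigI r n i) \<or> (\<exists>i\<in>{1..<r}. \<sigma> v \<in> SmallI r n i)"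
    using classify[of "\<sigma> v"] sv assms(1) by blast
  then show ?thesis
  proof (elim disjE bexE)
    fix i assume "i \<in> {1..r}" "\<sigma> v \<in> BigI r n i"
    moreover then have "c v = i" using alg_big[of V E \<sigma> c v i] alg assms(1) by blast
    ultimately show ?thesis using assms(2) by simp
  next
    fix i assume i: "i \<in> {1..<r}" and s: "\<sigma> v \<in> SmallI r n i"
    then have "c v = i \<or> c v = i + 1" using alg_small[of V E \<sigma> c v i] alg assms(1) by simp
    then show ?thesis
    proof
      assume "c v = i" then show ?thesis using i s assms(2) by simp
    next
      assume "c v = i + 1"
      then have "k = i + 1" using assms(2) by simp
      then show ?thesis using i s by simp
    qed
  qed
qed

lemma inV: "e \<in> E \<Longrightarrow> u \<in> e \<Longrightarrow> u \<in> V" using EV by blast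

lemma chain_from:
  "1 \<le> i \<Longrightarrow> i < r \<Longrightarrow> w \<in> V \<Longrightarrow> \<sigma> w \<in> SmallI r n i \<Longrightarrow> c w = i + 1 \<Longrightarrow>
   \<exists>l F W. 1 \<le> l \<and> l \<le> i \<and> W 1 = w \<and>
     (\<forall>j\<in>{1..l}. F j \<in> E \<and> W j \<in> F j \<and> \<sigma> (W j) \<in> SmallI r n (i + 1 - j)) \<and>
     (\<forall>j\<in>{1..<l}. W (Suc j) \<in> F j \<and> (\<forall>u\<in>F j - {W j, W (Suc j)}. \<sigma> (W (Suc j)) < \<sigma> u \<and> \<sigma> u < \<sigma> (W j))) \<and>
     (\<forall>u\<in>F l - {W l}. real (i + 1 - l) * T - T \<le> \<sigma> u \<and> \<sigma> u < \<sigma> (W l))"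
proof (induction i arbitrary: w rule: less_induct)
  case (less i)
  have i1: "i \<in> {1..<r}" using less.prems by simp
  have "c w = (if \<exists>e\<in>E. w \<in> e \<and> (\<forall>u\<in>e - {w}. already_colored r n \<sigma> w u \<and> c u = i) then i + 1 else i)"
    using alg_small[of V E \<sigma> c w i] alg less.prems i1 by blast
  then have "\<exists>e\<in>E. w \<in> e \<and> (\<forall>u\<in>e - {w}. already_colored r n \<sigma> w u \<and> c u = i)"
    using less.prems(5) by (cases "\<exists>e\<in>E. w \<in> e \<and> (\<forall>u\<in>e - {w}. already_colored r n \<sigma> w u \<and> c u = i)") simp_all
  then obtain f where fE: "f \<in> E" and wf: "w \<in> f" and fu: "\<forall>u\<in>f - {w}. already_colored r n \<sigma> w u \<and> c u = i"
    by blast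
  have fV: "u \<in> V" if "u \<in> f" for u using inV[OF fE that] .
  have below: "\<sigma> u < \<sigma> w" if "u \<in> f - {w}" for u
  proof -
    have ac: "already_colored r n \<sigma> w u" and cu: "c u = i" using fu that by auto
    from ac show ?thesis unfolding already_colored_def
    proof (elim disjE conjE bexE)
      fix j assume j: "j \<in> {1..r}" "\<sigma> u \<in> BigI r n j"
      then have "c u = j" using alg_big[of V E \<sigma> c u j] alg fV that by blast
      then have "j = i" using cu by simp
      then show ?thesis using Big_lt_Small[of "\<sigma> u" j "\<sigma> w" i] j less.prems by simp
    qed
  qed
  have cases_u: "(real i * T - T \<le> \<sigma> u) \<or> \<sigma> u \<in> SmallI r n (i - 1) \<and> 2 \<le> i" if "u \<in> f - {w}" for u
  proof -
    have "c u = i" using fu that by auto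
    from col_range[OF fV this] that show ?thesis unfolding BigI_mem SmallI_mem using a_pos by auto
  qed
  define S where "S = {u \<in> f - {w}. \<sigma> u \<in> SmallI r n (i - 1) \<and> 2 \<le> i}"
  have finf: "finite f" using fV finV by (meson finite_subset subsetI)
  show ?case
  proof (cases "S = {}")
    case True
    define F where "F = (\<lambda>j::nat. f)"
    define W where "W = (\<lambda>j::nat. w)"
    have "\<forall>u\<in>F 1 - {W 1}. real (i + 1 - 1) * T - T \<le> \<sigma> u \<and> \<sigma> u < \<sigma> (W 1)"
    proof
      fix u assume u: "u \<in> F 1 - {W 1}"
      then have "u \<in> f - {w}" unfolding F_def W_def by simp
      then have "real i * T - T \<le> \<sigma> u" using cases_u True unfolding S_def by blast
      then show "real (i + 1 - 1) * T - T \<le> \<sigma> u \<and> \<sigma> u < \<sigma> (W 1)" using below \<open>u \<in> f - {w}\<close> unfolding W_def by simp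
    qed
    moreover have "\<forall>j\<in>{1..1}. F j \<in> E \<and> W j \<in> F j \<and> \<sigma> (W j) \<in> SmallI r n (i + 1 - j)"
      using fE wf less.prems unfolding F_def W_def by simp
    ultimately show ?thesis using less.prems(1)
      by (intro exI[of _ 1] exI[of _ F] exI[of _ W]) (simp add: W_def)
  next
    case False
    have finS: "finite S" unfolding S_def using finf by simp
    obtain w' where w'S: "w' \<in> S" and w'min: "\<forall>y\<in>S. \<sigma> w' \<le> \<sigma> y" using fin_argmin[OF finS False] by blast
    have w'f: "w' \<in> f - {w}" and w'sm: "\<sigma> w' \<in> SmallI r n (i - 1)" and i2: "2 \<le> i" using w'S unfolding S_def by auto
    have w'V: "w' \<in> V" using fV w'f by simp
    have cw': "c w' = (i - 1) + 1" using fu w'f i2 by auto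
    have "\<exists>l F W. 1 \<le> l \<and> l \<le> i - 1 \<and> W 1 = w' \<and>
     (\<forall>j\<in>{1..l}. F j \<in> E \<and> W j \<in> F j \<and> \<sigma> (W j) \<in> SmallI r n (i - 1 + 1 - j)) \<and>
     (\<forall>j\<in>{1..<l}. W (Suc j) \<in> F j \<and> (\<forall>u\<in>F j - {W j, W (Suc j)}. \<sigma> (W (Suc j)) < \<sigma> u \<and> \<sigma> u < \<sigma> (W j))) \<and>
     (\<forall>u\<in>F l - {W l}. real (i - 1 + 1 - l) * T - T \<le> \<sigma> u \<and> \<sigma> u < \<sigma> (W l))"
      using less.IH[of "i - 1" w'] i2 less.prems w'V w'sm cw' by simp
    then obtain l' F' W' where l'1: "1 \<le> l'" and l'i: "l' \<le> i - 1" and W'1: "W' 1 = w'"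
      and C1: "\<forall>j\<in>{1..l'}. F' j \<in> E \<and> W' j \<in> F' j \<and> \<sigma> (W' j) \<in> SmallI r n (i - 1 + 1 - j)"
      and C2: "\<forall>j\<in>{1..<l'}. W' (Suc j) \<in> F' j \<and> (\<forall>u\<in>F' j - {W' j, W' (Suc j)}. \<sigma> (W' (Suc j)) < \<sigma> u \<and> \<sigma> u < \<sigma> (W' j))"
      and C3: "\<forall>u\<in>F' l' - {W' l'}. real (i - 1 + 1 - l') * T - T \<le> \<sigma> u \<and> \<sigma> u < \<sigma> (W' l')"
      by blast
    define F where "F = (\<lambda>j. if j = 1 then f else F' (j - 1))"
    define W where "W = (\<lambda>j. if j = 1 then w else W' (j - 1))"
    have D1: "\<forall>j\<in>{1..Suc l'}. F j \<in> E \<and> W j \<in> F j \<and> \<sigma> (W j) \<in> SmallI r n (i + 1 - j)"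
    proof
      fix j assume j: "j \<in> {1..Suc l'}"
      show "F j \<in> E \<and> W j \<in> F j \<and> \<sigma> (W j) \<in> SmallI r n (i + 1 - j)"
      proof (cases "j = 1")
        case True then show ?thesis using fE wf less.prems unfolding F_def W_def by simp
      next
        case False
        then have jj: "j - 1 \<in> {1..l'}" using j by auto
        have eq: "i - 1 + 1 - (j - 1) = i + 1 - j" using False j i2 by auto
        have X: "F' (j - 1) \<in> E \<and> W' (j - 1) \<in> F' (j - 1) \<and> \<sigma> (W' (j - 1)) \<in> SmallI r n (i - 1 + 1 - (j - 1))"
          using C1 jj by blast
        show ?thesis using X[unfolded eq] False unfolding F_def W_def by simp
      qed
    qed
    have D2: "\<forall>j\<in>{1..<Suc l'}. W (Suc j) \<in> F j \<and> (\<forall>u\<in>F j - {W j, W (Suc j)}. \<sigma> (W (Suc j)) < \<sigma> u \<and> \<sigma> u < \<sigma> (W j))"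
    proof
      fix j assume j: "j \<in> {1..<Suc l'}"
      show "W (Suc j) \<in> F j \<and> (\<forall>u\<in>F j - {W j, W (Suc j)}. \<sigma> (W (Suc j)) < \<sigma> u \<and> \<sigma> u < \<sigma> (W j))"
      proof (cases "j = 1")
        case True
        have WS: "W (Suc j) = w'" using True W'1 unfolding W_def by simp
        have "\<sigma> w' < \<sigma> u \<and> \<sigma> u < \<sigma> w" if u: "u \<in> f - {w, w'}" for u
        proof
          show "\<sigma> u < \<sigma> w" using below u by blast
          have uf: "u \<in> f - {w}" using u by blast
          show "\<sigma> w' < \<sigma> u"
          proof (cases "u \<in> S")
            case True
            then have "\<sigma> w' \<le> \<sigma> u" using w'min by blast
            moreover have "\<sigma> w' \<noteq> \<sigma> u" using injs w'V fV uf u unfolding inj_on_def by blast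
            ultimately show ?thesis by simp
          next
            case False
            then have "real i * T - T \<le> \<sigma> u" using cases_u[OF uf] unfolding S_def using uf by blast
            moreover have "\<sigma> w' < real (i - 1) * T" using w'sm unfolding SmallI_mem by simp
            moreover have "real (i - 1) = real i - 1" using i2 by simp
            ultimately show ?thesis by (simp add: algebra_simps)
          qed
        qed
        then show ?thesis using True WS w'f unfolding F_def W_def by auto
      next
        case False
        then have jj: "j - 1 \<in> {1..<l'}" using j by auto
        have e2: "Suc (j - 1) = j" using False j by auto
        have X: "W' (Suc (j - 1)) \<in> F' (j - 1) \<and> (\<forall>u\<in>F' (j - 1) - {W' (j - 1), W' (Suc (j - 1))}. \<sigma> (W' (Suc (j - 1))) < \<sigma> u \<and> \<sigma> u < \<sigma> (W' (j - 1)))"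
          using C2 jj by blast
        have "W (Suc j) = W' j" "W j = W' (j - 1)" "F j = F' (j - 1)" using False j unfolding W_def F_def by auto
        then show ?thesis using X[unfolded e2] by simp
      qed
    qed
    have D3: "\<forall>u\<in>F (Suc l') - {W (Suc l')}. real (i + 1 - Suc l') * T - T \<le> \<sigma> u \<and> \<sigma> u < \<sigma> (W (Suc l'))"
    proof -
      have "i - 1 + 1 - l' = i + 1 - Suc l'" using i2 by simp
      then show ?thesis using C3 l'1 unfolding F_def W_def by simp
    qed
    show ?thesis
      apply (rule exI[of _ "Suc l'"], rule exI[of _ F], rule exI[of _ W])
      using D1 D2 D3 l'i i2 unfolding W_def by simp
  qed
qed


lemma mono_cases:
  assumes eE: "e \<in> E" and ne: "e \<noteq> {}" and mono: "\<forall>u\<in>e. c u = k"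
  shows "(\<exists>k\<in>{1..r}. \<forall>u\<in>e. \<sigma> u \<in> BigI r n k) \<or>
         (\<exists>k l es W. 2 \<le> k \<and> k \<le> r \<and> 1 \<le> l \<and> l < k \<and> chainP r n E \<sigma> k l es W)"
proof -
  have eV: "u \<in> V" if "u \<in> e" for u using inV[OF eE that] .
  have finE: "finite e" using eV finV by (meson finite_subset subsetI)
  have cr: "(\<sigma> u \<in> BigI r n k \<and> k \<in> {1..r}) \<or> (\<sigma> u \<in> SmallI r n k \<and> k \<in> {1..<r}) \<or>
         (2 \<le> k \<and> \<sigma> u \<in> SmallI r n (k - 1) \<and> k - 1 \<in> {1..<r})" if "u \<in> e" for u
    using col_range[OF eV[OF that]] mono that by blast
  have noS: "\<not> (\<sigma> u \<in> SmallI r n k)" if "u \<in> e" for u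
  proof
    assume "\<sigma> u \<in> SmallI r n k"
    define SS where "SS = {u \<in> e. \<sigma> u \<in> SmallI r n k}"
    have "SS \<noteq> {}" "finite SS" using that \<open>\<sigma> u \<in> SmallI r n k\<close> finE unfolding SS_def by auto
    then obtain v where vS: "v \<in> SS" and vmax: "\<forall>y\<in>SS. \<sigma> y \<le> \<sigma> v" using fin_argmax by blast
    have ve: "v \<in> e" and vsm: "\<sigma> v \<in> SmallI r n k" using vS unfolding SS_def by auto
    have k1: "k \<in> {1..<r}"
      using cr[OF ve] vsm Big_Small_disj Small_Small_unique[of "\<sigma> v" k "k - 1"] by auto
    have cond: "\<forall>u\<in>e - {v}. already_colored r n \<sigma> v u \<and> c u = k"
    proof
      fix u assume u: "u \<in> e - {v}"
      then have ue: "u \<in> e" by simp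
      have "already_colored r n \<sigma> v u"
        using cr[OF ue]
      proof (elim disjE conjE)
        assume "\<sigma> u \<in> BigI r n k" "k \<in> {1..r}"
        then show ?thesis unfolding already_colored_def by blast
      next
        assume us: "\<sigma> u \<in> SmallI r n k"
        then have "u \<in> SS" using ue unfolding SS_def by simp
        then have "\<sigma> u \<le> \<sigma> v" using vmax by blast
        moreover have "\<sigma> u \<noteq> \<sigma> v" using injs eV[OF ue] eV[OF ve] u unfolding inj_on_def by blast
        ultimately show ?thesis using us k1 unfolding already_colored_def by auto
      next
        assume us: "\<sigma> u \<in> SmallI r n (k - 1)" "k - 1 \<in> {1..<r}" "2 \<le> k"
        then have "\<sigma> u < \<sigma> v" using Small_lt_Small[of "\<sigma> u" "k - 1" "\<sigma> v" k] vsm by simp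
        then show ?thesis using us unfolding already_colored_def by blast
      qed
      then show "already_colored r n \<sigma> v u \<and> c u = k" using mono ue by simp
    qed
    have "c v = (if \<exists>e\<in>E. v \<in> e \<and> (\<forall>u\<in>e - {v}. already_colored r n \<sigma> v u \<and> c u = k) then k + 1 else k)"
      using alg_small[of V E \<sigma> c v k] alg eV[OF ve] k1 vsm by blast
    moreover have "\<exists>e\<in>E. v \<in> e \<and> (\<forall>u\<in>e - {v}. already_colored r n \<sigma> v u \<and> c u = k)"
      using eE ve cond by blast
    ultimately have "c v = k + 1" by simp
    then show False using mono ve by simp
  qed
  define S2 where "S2 = {u \<in> e. \<sigma> u \<in> SmallI r n (k - 1) \<and> 2 \<le> k \<and> k - 1 \<in> {1..<r}}"
  show ?thesis
  proof (cases "S2 = {}")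
    case True
    obtain u0 where "u0 \<in> e" using ne by blast
    then have k1: "k \<in> {1..r}" using cr[of u0] by auto
    have "\<forall>u\<in>e. \<sigma> u \<in> BigI r n k" using cr noS True unfolding S2_def by blast
    then show ?thesis using k1 by blast
  next
    case False
    have "finite S2" using finE unfolding S2_def by simp
    then obtain w where wS: "w \<in> S2" and wmin: "\<forall>y\<in>S2. \<sigma> w \<le> \<sigma> y" using fin_argmin False by blast
    have we: "w \<in> e" and wsm: "\<sigma> w \<in> SmallI r n (k - 1)" and k2: "2 \<le> k" and kr: "k - 1 < r"
      using wS unfolding S2_def by auto
    have cw: "c w = (k - 1) + 1" using mono we k2 by simp
    have pre: "1 \<le> k - 1" "k - 1 < r" "w \<in> V" "\<sigma> w \<in> SmallI r n (k - 1)" "c w = k - 1 + 1"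
      using k2 kr eV[OF we] wsm cw by auto
    obtain l F W where l1: "1 \<le> l" and lk: "l \<le> k - 1" and W1: "W 1 = w"
      and C1: "\<forall>j\<in>{1..l}. F j \<in> E \<and> W j \<in> F j \<and> \<sigma> (W j) \<in> SmallI r n (k - 1 + 1 - j)"
      and C2: "\<forall>j\<in>{1..<l}. W (Suc j) \<in> F j \<and> (\<forall>u\<in>F j - {W j, W (Suc j)}. \<sigma> (W (Suc j)) < \<sigma> u \<and> \<sigma> u < \<sigma> (W j))"
      and C3: "\<forall>u\<in>F l - {W l}. real (k - 1 + 1 - l) * T - T \<le> \<sigma> u \<and> \<sigma> u < \<sigma> (W l)"
      using chain_from[OF pre] by blast
    have kk: "k - 1 + 1 = k" using k2 by simp
    define es where "es = (\<lambda>j. if j = 0 then e else F j)"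
    have "chainP r n E \<sigma> k l es W"
      unfolding chainP_def
    proof (intro conjI)
      show "\<forall>j\<in>{0..l}. es j \<in> E" using eE C1 unfolding es_def by auto
      show "\<forall>j\<in>{1..l}. W j \<in> es (j - 1) \<and> W j \<in> es j \<and> \<sigma> (W j) \<in> SmallI r n (k - j)"
      proof
        fix j assume j: "j \<in> {1..l}"
        have a1: "W j \<in> es (j - 1)"
        proof (cases "j = 1")
          case True then show ?thesis using W1 we unfolding es_def by simp
        next
          case False
          then have "j - 1 \<in> {1..<l}" using j by auto
          then have "W (Suc (j - 1)) \<in> F (j - 1)" using C2 by blast
          moreover have "Suc (j - 1) = j" using False j by auto
          ultimately show ?thesis using False unfolding es_def by auto
        qed
        have "F j \<in> E \<and> W j \<in> F j \<and> \<sigma> (W j) \<in> SmallI r n (k - 1 + 1 - j)" using C1 j by blast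
        then have "W j \<in> es j \<and> \<sigma> (W j) \<in> SmallI r n (k - j)" using j unfolding es_def kk by auto
        then show "W j \<in> es (j - 1) \<and> W j \<in> es j \<and> \<sigma> (W j) \<in> SmallI r n (k - j)" using a1 by blast
      qed
      show "\<forall>u\<in>es 0 - {W 1}. \<sigma> (W 1) < \<sigma> u \<and> \<sigma> u < real k * (aa r n + bb r n) - (aa r n + bb r n) + aa r n"
      proof
        fix u assume "u \<in> es 0 - {W 1}"
        then have ue: "u \<in> e" and uw: "u \<noteq> w" using W1 unfolding es_def by auto
        have rk: "real (k - 1) = real k - 1" using k2 by simp
        show "\<sigma> (W 1) < \<sigma> u \<and> \<sigma> u < real k * (aa r n + bb r n) - (aa r n + bb r n) + aa r n"
          using cr[OF ue]
        proof (elim disjE conjE)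
          assume "\<sigma> u \<in> BigI r n k" "k \<in> {1..r}"
          then show ?thesis using Small_lt_Big[of "\<sigma> w" "k - 1" "\<sigma> u" k] wsm k2 W1 unfolding BigI_mem by simp
        next
          assume "\<sigma> u \<in> SmallI r n k" then show ?thesis using noS ue by blast
        next
          assume us: "2 \<le> k" "\<sigma> u \<in> SmallI r n (k - 1)" "k - 1 \<in> {1..<r}"
          then have "u \<in> S2" using ue unfolding S2_def by simp
          then have "\<sigma> w \<le> \<sigma> u" using wmin by blast
          moreover have "\<sigma> u \<noteq> \<sigma> w" using injs eV[OF ue] eV[OF we] uw unfolding inj_on_def by blast
          moreover have "\<sigma> u < real (k - 1) * T" using us unfolding SmallI_mem by simp
          ultimately show ?thesis using W1 a_pos unfolding rk by (simp add: algebra_simps)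
        qed
      qed
      show "\<forall>j\<in>{1..<l}. \<forall>u\<in>es j - {W j, W (Suc j)}. \<sigma> (W (Suc j)) < \<sigma> u \<and> \<sigma> u < \<sigma> (W j)"
        using C2 unfolding es_def by auto
      show "\<forall>u\<in>es l - {W l}. real (k - l) * (aa r n + bb r n) - (aa r n + bb r n) \<le> \<sigma> u \<and> \<sigma> u < \<sigma> (W l)"
        using C3 l1 unfolding es_def kk by auto
    qed
    moreover have "2 \<le> k \<and> k \<le> r \<and> 1 \<le> l \<and> l < k" using k2 l1 lk kr by arith
    ultimately show ?thesis by blast
  qed
qed

end

definition Wf :: "(nat \<Rightarrow> nat set) \<Rightarrow> nat \<Rightarrow> nat" where
  "Wf es j = the_elem (es (j - 1) \<inter> es j)"
definition Dset :: "nat \<Rightarrow> (nat \<Rightarrow> nat set) \<Rightarrow> nat \<Rightarrow> nat set" where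
  "Dset l es j = es j - Wf es ` ({j, Suc j} \<inter> {1..l})"
definition validc :: "nat set set \<Rightarrow> nat \<Rightarrow> (nat \<Rightarrow> nat set) \<Rightarrow> bool" where
  "validc E l es \<longleftrightarrow> (\<forall>j\<in>{0..l}. es j \<in> E) \<and> (\<forall>j\<in>{1..l}. \<exists>w. es (j - 1) \<inter> es j = {w}) \<and>
     inj_on (Wf es) {1..l} \<and> (\<forall>i\<in>{0..l}. \<forall>j\<in>{0..l}. i \<noteq> j \<longrightarrow> Dset l es i \<inter> Dset l es j = {}) \<and>
     (\<forall>j\<in>{0..l}. Dset l es j \<inter> Wf es ` {1..l} = {})"

definition stS :: "nat \<Rightarrow> nat \<Rightarrow> nat \<Rightarrow> real" where
  "stS r n i = real i * (aa r n + bb r n) - (aa r n + bb r n) + aa r n"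
definition hh :: "nat \<Rightarrow> nat \<Rightarrow> nat \<Rightarrow> real" where
  "hh r n m = bb r n / real m"
definition piece :: "nat \<Rightarrow> nat \<Rightarrow> nat \<Rightarrow> nat \<Rightarrow> nat \<Rightarrow> real set" where
  "piece r n m i s = {stS r n i + real s * hh r n m ..< stS r n i + (real s + 1) * hh r n m}"
definition HiP :: "nat \<Rightarrow> nat \<Rightarrow> nat \<Rightarrow> nat \<Rightarrow> (nat \<Rightarrow> nat) \<Rightarrow> nat \<Rightarrow> real" where
  "HiP r n m k ss j = (if j = 0 then stS r n k else stS r n (k - j) + (real (ss j) + 1) * hh r n m)"
definition LoP :: "nat \<Rightarrow> nat \<Rightarrow> nat \<Rightarrow> nat \<Rightarrow> nat \<Rightarrow> (nat \<Rightarrow> nat) \<Rightarrow> nat \<Rightarrow> real" where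
  "LoP r n m k l ss j = (if j < l then stS r n (k - j - 1) + real (ss (Suc j)) * hh r n m
      else real (k - l) * (aa r n + bb r n) - (aa r n + bb r n))"
definition Yc :: "nat \<Rightarrow> nat \<Rightarrow> nat \<Rightarrow> nat \<Rightarrow> nat \<Rightarrow> (nat \<Rightarrow> nat) \<Rightarrow> nat + nat \<Rightarrow> real set" where
  "Yc r n m k l ss t = (case t of Inl j \<Rightarrow> piece r n m (k - j) (ss j)
      | Inr j \<Rightarrow> {LoP r n m k l ss j ..< HiP r n m k ss j})"
definition Gc :: "nat \<Rightarrow> (nat \<Rightarrow> nat set) \<Rightarrow> nat + nat \<Rightarrow> nat set" where
  "Gc l es t = (case t of Inl j \<Rightarrow> {Wf es j} | Inr j \<Rightarrow> Dset l es j)"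
definition Kc :: "nat \<Rightarrow> (nat + nat) set" where
  "Kc l = Inl ` {1..l} \<union> Inr ` {0..l}"
definition boxc :: "nat set \<Rightarrow> nat \<Rightarrow> nat \<Rightarrow> nat \<Rightarrow> nat \<Rightarrow> nat \<Rightarrow> (nat \<Rightarrow> nat set) \<Rightarrow> (nat \<Rightarrow> nat) \<Rightarrow> (nat \<Rightarrow> real) set" where
  "boxc V r n m k l es ss = {\<sigma> \<in> space (weight_space V). \<forall>t\<in>Kc l. \<forall>u\<in>Gc l es t. \<sigma> u \<in> Yc r n m k l ss t}"

lemma (in params) hh_pos: "m \<ge> 1 \<Longrightarrow> hh r n m > 0" unfolding hh_def using b_pos by simp

context colsetup
begin

lemma SmallI_stS: "x \<in> SmallI r n i \<longleftrightarrow> stS r n i \<le> x \<and> x < stS r n i + b"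
  unfolding SmallI_mem stS_def by (auto simp: algebra_simps)

lemma chain_valid:
  assumes ch: "chainP r n E \<sigma> k l es W" and k: "k \<le> r" and l: "1 \<le> l" "l < k"
  shows "validc E l es" and "\<forall>j\<in>{1..l}. Wf es j = W j"
proof -
  have esE: "\<forall>j\<in>{0..l}. es j \<in> E" and
    C1: "\<forall>j\<in>{1..l}. W j \<in> es (j - 1) \<and> W j \<in> es j \<and> \<sigma> (W j) \<in> SmallI r n (k - j)" and
    C0: "\<forall>u\<in>es 0 - {W 1}. \<sigma> (W 1) < \<sigma> u \<and> \<sigma> u < real k * T - T + a" and
    C2: "\<forall>j\<in>{1..<l}. \<forall>u\<in>es j - {W j, W (Suc j)}. \<sigma> (W (Suc j)) < \<sigma> u \<and> \<sigma> u < \<sigma> (W j)" and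
    C3: "\<forall>u\<in>es l - {W l}. real (k - l) * T - T \<le> \<sigma> u \<and> \<sigma> u < \<sigma> (W l)"
    using ch unfolding chainP_def by auto
  have Wmono: "\<sigma> (W j') < \<sigma> (W j)" if "j \<in> {1..l}" "j' \<in> {1..l}" "j < j'" for j j'
    using Small_lt_Small[of "\<sigma> (W j')" "k - j'" "\<sigma> (W j)" "k - j"] C1 that l by auto
  have Wmono': "\<sigma> (W j') \<le> \<sigma> (W j)" if "j \<in> {1..l}" "j' \<in> {1..l}" "j \<le> j'" for j j'
    using Wmono[OF that(1,2)] that(3) by (cases "j = j'") auto
  have up: "\<sigma> u < \<sigma> (W j)" if "j \<in> {1..l}" "u \<in> es j" "u \<noteq> W j" for u j
  proof (cases "j < l")
    case True
    show ?thesis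
    proof (cases "u = W (Suc j)")
      case True then show ?thesis using Wmono[of j "Suc j"] that \<open>j < l\<close> by auto
    next
      case False then show ?thesis using C2 that \<open>j < l\<close> by auto
    qed
  next
    case False then have "j = l" using that by auto
    then show ?thesis using C3 that by auto
  qed
  have lo: "\<sigma> (W (Suc j)) < \<sigma> u" if "j \<in> {0..<l}" "u \<in> es j" "u \<noteq> W (Suc j)" "j \<noteq> 0 \<Longrightarrow> u \<noteq> W j" for u j
  proof (cases "j = 0")
    case True then show ?thesis using C0 that by auto
  next
    case False then show ?thesis using C2 that by auto
  qed
  have sing: "es (j - 1) \<inter> es j = {W j}" if j: "j \<in> {1..l}" for j
  proof
    show "{W j} \<subseteq> es (j - 1) \<inter> es j" using C1 j by auto
    show "es (j - 1) \<inter> es j \<subseteq> {W j}"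
    proof
      fix x assume x: "x \<in> es (j - 1) \<inter> es j"
      show "x \<in> {W j}"
      proof (rule ccontr)
        assume xn: "x \<notin> {W j}"
        then have a1: "\<sigma> x < \<sigma> (W j)" using up[OF j] x by auto
        have "\<sigma> (W j) < \<sigma> x"
        proof (cases "j - 1 \<noteq> 0 \<and> x = W (j - 1)")
          case True
          have "1 \<le> j - 1" using True by arith
          moreover have "j - 1 < j" using True by arith
          ultimately have "\<sigma> (W j) < \<sigma> (W (j - 1))" using Wmono[of "j - 1" j] j by auto
          then show ?thesis using True by simp
        next
          case False
          have "j - 1 \<in> {0..<l}" using j by auto
          moreover have "Suc (j - 1) = j" using j by auto
          ultimately show ?thesis using lo[of "j - 1" x] x xn False by auto
        qed
        then show False using a1 by simp
      qed
    qed
  qed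
  show WfW: "\<forall>j\<in>{1..l}. Wf es j = W j" unfolding Wf_def using sing by simp
  have injW: "inj_on W {1..l}"
  proof (rule inj_onI)
    fix i j assume "i \<in> {1..l}" "j \<in> {1..l}" "W i = W j"
    then show "i = j" using Wmono[of i j] Wmono[of j i] by (cases i j rule: linorder_cases) auto
  qed
  have Dset_eq: "Dset l es j = es j - W ` ({j, Suc j} \<inter> {1..l})" if "j \<in> {0..l}" for j
  proof -
    have "Wf es ` ({j, Suc j} \<inter> {1..l}) = W ` ({j, Suc j} \<inter> {1..l})"
      using WfW by (intro image_cong) auto
    then show ?thesis unfolding Dset_def by simp
  qed
  have Dlo: "\<sigma> (W (Suc j)) < \<sigma> u" if "j \<in> {0..<l}" "u \<in> Dset l es j" for j u
  proof -
    have "u \<in> es j" "u \<noteq> W (Suc j)" "j \<noteq> 0 \<Longrightarrow> u \<noteq> W j" using that Dset_eq[of j] by auto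
    then show ?thesis using lo that(1) by blast
  qed
  have Dup: "\<sigma> u < \<sigma> (W j)" if "j \<in> {1..l}" "u \<in> Dset l es j" for j u
  proof -
    have "u \<in> es j" "u \<noteq> W j" using that Dset_eq[of j] by auto
    then show ?thesis using up that(1) by blast
  qed
  have disj: "\<forall>i\<in>{0..l}. \<forall>j\<in>{0..l}. i \<noteq> j \<longrightarrow> Dset l es i \<inter> Dset l es j = {}"
  proof (intro ballI impI)
    fix i j assume ij: "i \<in> {0..l}" "j \<in> {0..l}" "i \<noteq> j"
    have key: "Dset l es i' \<inter> Dset l es j' = {}" if "i' \<in> {0..l}" "j' \<in> {0..l}" "i' < j'" for i' j'
    proof (rule ccontr)
      assume "Dset l es i' \<inter> Dset l es j' \<noteq> {}"
      then obtain u where u: "u \<in> Dset l es i'" "u \<in> Dset l es j'" by blast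
      have "\<sigma> (W (Suc i')) < \<sigma> u" using Dlo[of i' u] u that by auto
      moreover have "\<sigma> u < \<sigma> (W j')" using Dup[of j' u] u that by auto
      moreover have "\<sigma> (W j') \<le> \<sigma> (W (Suc i'))" using Wmono'[of "Suc i'" j'] that by auto
      ultimately show False by simp
    qed
    show "Dset l es i \<inter> Dset l es j = {}"
      using key[of i j] key[of j i] ij by (cases i j rule: linorder_cases) auto
  qed
  have disjW: "\<forall>j\<in>{0..l}. Dset l es j \<inter> Wf es ` {1..l} = {}"
  proof
    fix j assume j: "j \<in> {0..l}"
    have "Wf es ` {1..l} = W ` {1..l}" using WfW by (intro image_cong) auto
    moreover have "Dset l es j \<inter> W ` {1..l} = {}"
    proof (rule ccontr)
      assume "Dset l es j \<inter> W ` {1..l} \<noteq> {}"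
      then obtain j' where j': "j' \<in> {1..l}" "W j' \<in> Dset l es j" by blast
      have nj: "j' \<noteq> j" "j' \<noteq> Suc j" using j' Dset_eq[OF j] by auto
      show False
      proof (cases "j' < j")
        case True
        then have "\<sigma> (W j') > \<sigma> (W j)" using Wmono[of j' j] j' j by auto
        moreover have "\<sigma> (W j') < \<sigma> (W j)" using Dup[of j "W j'"] j' j True by auto
        ultimately show False by simp
      next
        case False
        then have "Suc j < j'" using nj by auto
        then have "\<sigma> (W j') < \<sigma> (W (Suc j))" using Wmono[of "Suc j" j'] j' by auto
        moreover have "\<sigma> (W (Suc j)) < \<sigma> (W j')" using Dlo[of j "W j'"] j' \<open>Suc j < j'\<close> by auto
        ultimately show False by simp
      qed
    qed
    ultimately show "Dset l es j \<inter> Wf es ` {1..l} = {}" by simp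
  qed
  have injWf: "inj_on (Wf es) {1..l}"
    using injW WfW by (metis inj_on_cong)
  show "validc E l es" unfolding validc_def using esE sing injWf disj disjW by blast
qed


lemma floor_piece:
  fixes x st h :: real
  assumes h: "h > 0" and "st \<le> x" "x < st + real m * h"
  shows "nat \<lfloor>(x - st) / h\<rfloor> < m \<and> st + real (nat \<lfloor>(x - st) / h\<rfloor>) * h \<le> x \<and>
         x < st + (real (nat \<lfloor>(x - st) / h\<rfloor>) + 1) * h"
proof -
  define y where "y = (x - st) / h"
  have y0: "0 \<le> y" using assms unfolding y_def by simp
  have ym: "y < real m" using assms unfolding y_def by (simp add: field_simps)
  have f0: "0 \<le> \<lfloor>y\<rfloor>" using y0 by simp
  have e: "real (nat \<lfloor>y\<rfloor>) = of_int \<lfloor>y\<rfloor>" using f0 by simp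
  have a1: "of_int \<lfloor>y\<rfloor> \<le> y" by simp
  have a2: "y < of_int \<lfloor>y\<rfloor> + 1" by linarith
  have "nat \<lfloor>y\<rfloor> < m" using a1 ym e by linarith
  moreover have "st + real (nat \<lfloor>y\<rfloor>) * h \<le> x"
  proof -
    have "real (nat \<lfloor>y\<rfloor>) * h \<le> y * h" using a1 e h by (simp add: mult_right_mono)
    also have "y * h = x - st" unfolding y_def using h by simp
    finally show ?thesis by simp
  qed
  moreover have "x < st + (real (nat \<lfloor>y\<rfloor>) + 1) * h"
  proof -
    have "y * h < (real (nat \<lfloor>y\<rfloor>) + 1) * h" using a2 e h by (simp add: mult_strict_right_mono)
    moreover have "y * h = x - st" unfolding y_def using h by simp
    ultimately show ?thesis by simp
  qed
  ultimately show ?thesis unfolding y_def by blast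
qed


lemma chain_in_box:
  assumes ch: "chainP r n E \<sigma> k l es W" and k: "k \<le> r" and l: "1 \<le> l" "l < k"
    and m: "m \<ge> 1" and sp: "\<sigma> \<in> space (weight_space V)"
  shows "\<exists>ss\<in>PiE {1..l} (\<lambda>_. {..<m}). \<sigma> \<in> boxc V r n m k l es ss"
proof -
  have C1: "\<forall>j\<in>{1..l}. W j \<in> es (j - 1) \<and> W j \<in> es j \<and> \<sigma> (W j) \<in> SmallI r n (k - j)" and
    C0: "\<forall>u\<in>es 0 - {W 1}. \<sigma> (W 1) < \<sigma> u \<and> \<sigma> u < real k * T - T + a" and
    C2: "\<forall>j\<in>{1..<l}. \<forall>u\<in>es j - {W j, W (Suc j)}. \<sigma> (W (Suc j)) < \<sigma> u \<and> \<sigma> u < \<sigma> (W j)" and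
    C3: "\<forall>u\<in>es l - {W l}. real (k - l) * T - T \<le> \<sigma> u \<and> \<sigma> u < \<sigma> (W l)"
    using ch unfolding chainP_def by auto
  have WfW: "\<forall>j\<in>{1..l}. Wf es j = W j" using chain_valid[OF ch k l] by blast
  let ?h = "hh r n m"
  have h: "?h > 0" using hh_pos[OF m] .
  have mh: "real m * ?h = b" unfolding hh_def using m by simp
  define ss where "ss = (\<lambda>j. if j \<in> {1..l} then nat \<lfloor>(\<sigma> (W j) - stS r n (k - j)) / ?h\<rfloor> else undefined)"
  have P: "ss j < m \<and> \<sigma> (W j) \<in> piece r n m (k - j) (ss j)" if j: "j \<in> {1..l}" for j
  proof -
    have "\<sigma> (W j) \<in> SmallI r n (k - j)" using C1 j by blast
    then have "stS r n (k - j) \<le> \<sigma> (W j)" "\<sigma> (W j) < stS r n (k - j) + real m * ?h"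
      unfolding SmallI_stS mh by auto
    from floor_piece[OF h this] show ?thesis using j unfolding ss_def piece_def by simp
  qed
  have ssP: "ss \<in> PiE {1..l} (\<lambda>_. {..<m})" using P unfolding ss_def PiE_def extensional_def by auto
  have inbox: "\<forall>t\<in>Kc l. \<forall>u\<in>Gc l es t. \<sigma> u \<in> Yc r n m k l ss t"
  proof (intro ballI)
    fix t u assume t: "t \<in> Kc l" and u: "u \<in> Gc l es t"
    show "\<sigma> u \<in> Yc r n m k l ss t"
    proof (cases t)
      case (Inl j)
      then have j: "j \<in> {1..l}" using t unfolding Kc_def by auto
      then have "u = W j" using u Inl WfW unfolding Gc_def by auto
      then show ?thesis using P[OF j] Inl unfolding Yc_def by simp
    next
      case (Inr j)
      then have j: "j \<in> {0..l}" using t unfolding Kc_def by auto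
      have uD: "u \<in> es j - Wf es ` ({j, Suc j} \<inter> {1..l})" using u Inr unfolding Gc_def Dset_def by simp
      have Wimg: "Wf es ` ({j, Suc j} \<inter> {1..l}) = W ` ({j, Suc j} \<inter> {1..l})"
        using WfW by (intro image_cong) auto
      have uD': "u \<in> es j" "\<And>i. i \<in> {j, Suc j} \<inter> {1..l} \<Longrightarrow> u \<noteq> W i" using uD unfolding Wimg by auto
      have lo: "LoP r n m k l ss j \<le> \<sigma> u"
      proof (cases "j < l")
        case True
        have sj: "Suc j \<in> {1..l}" using True by simp
        have "\<sigma> (W (Suc j)) < \<sigma> u"
        proof (cases "j = 0")
          case True
          then show ?thesis using C0 uD'(1) uD'(2)[of 1] l by auto
        next
          case False
          then have "j \<in> {1..<l}" using \<open>j < l\<close> by simp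
          then show ?thesis using C2 uD'(1) uD'(2)[of j] uD'(2)[of "Suc j"] \<open>j < l\<close> False by auto
        qed
        moreover have "stS r n (k - Suc j) + real (ss (Suc j)) * ?h \<le> \<sigma> (W (Suc j))"
          using P[OF sj] unfolding piece_def by simp
        moreover have "k - j - 1 = k - Suc j" by simp
        ultimately show ?thesis using True unfolding LoP_def by simp
      next
        case False
        then have "j = l" using j by simp
        then have "real (k - l) * T - T \<le> \<sigma> u" using C3 uD'(1) uD'(2)[of l] l by auto
        then show ?thesis using \<open>j = l\<close> unfolding LoP_def by simp
      qed
      have hi: "\<sigma> u < HiP r n m k ss j"
      proof (cases "j = 0")
        case True
        then have "\<sigma> u < real k * T - T + a" using C0 uD'(1) uD'(2)[of 1] l by auto
        then show ?thesis using True unfolding HiP_def stS_def by simp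
      next
        case False
        then have j1: "j \<in> {1..l}" using j by simp
        have "\<sigma> u < \<sigma> (W j)"
        proof (cases "j < l")
          case True
          then have "j \<in> {1..<l}" using False by simp
          then show ?thesis using C2 uD'(1) uD'(2)[of j] uD'(2)[of "Suc j"] True False by auto
        next
          case F2: False
          then have "j = l" using j by simp
          then show ?thesis using C3 uD'(1) uD'(2)[of l] l by auto
        qed
        moreover have "\<sigma> (W j) < stS r n (k - j) + (real (ss j) + 1) * ?h"
          using P[OF j1] unfolding piece_def by simp
        ultimately show ?thesis using False unfolding HiP_def by simp
      qed
      show ?thesis using lo hi Inr unfolding Yc_def by simp
    qed
  qed
  show ?thesis using ssP inbox sp unfolding boxc_def by blast
qed

end

abbreviation UU :: "real measure" where "UU \<equiv> uniform_measure lborel {0..<1::real}"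

lemma UU_prob: "prob_space UU"
  by (rule prob_space_uniform_measure) simp_all

lemma sets_UU[simp]: "sets UU = sets borel" by simp

lemma UU_le1: "measure UU B \<le> 1"
  using prob_space.prob_le_1[OF UU_prob] .

lemma UU_Ico: assumes "x \<le> y" shows "measure UU {x..<y} \<le> y - x"
proof -
  have "measure UU {x..<y} = measure lborel ({0..<1} \<inter> {x..<y}) / measure lborel {0..<1::real}"
    by (rule measure_uniform_measure) simp_all
  also have "\<dots> = measure lborel ({0..<1} \<inter> {x..<y})" by simp
  also have "\<dots> \<le> measure lborel {x..<y}"
    by (rule measure_mono_fmeasurable) (use assms in \<open>auto simp: fmeasurable_def\<close>)
  also have "\<dots> = y - x" using assms by simp
  finally show ?thesis .
qed

lemma UU_nonneg: "0 \<le> measure UU B" by simp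

lemma space_ws: "space (weight_space V) = PiE V (\<lambda>_. UNIV)"
  unfolding weight_space_def by (simp add: space_PiM)

lemma box_measure:
  fixes K :: "'k set" and G :: "'k \<Rightarrow> nat set" and Y :: "'k \<Rightarrow> real set" and V :: "nat set"
  assumes V: "finite V" and K: "finite K" and GV: "\<forall>t\<in>K. G t \<subseteq> V"
    and disj: "\<forall>s\<in>K. \<forall>t\<in>K. s \<noteq> t \<longrightarrow> G s \<inter> G t = {}" and Y: "\<forall>t\<in>K. Y t \<in> sets borel"
  shows "{\<sigma> \<in> space (weight_space V). \<forall>t\<in>K. \<forall>u\<in>G t. \<sigma> u \<in> Y t} \<in> sets (weight_space V)"
    and "measure (weight_space V) {\<sigma> \<in> space (weight_space V). \<forall>t\<in>K. \<forall>u\<in>G t. \<sigma> u \<in> Y t}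
         = (\<Prod>t\<in>K. measure UU (Y t) ^ card (G t))"
proof -
  define J where "J = \<Union>(G ` K)"
  define X where "X = (\<lambda>u. Y (SOME t. t \<in> K \<and> u \<in> G t))"
  have JV: "J \<subseteq> V" using GV unfolding J_def by blast
  have finJ: "finite J" using JV V finite_subset by blast
  have Xp: "X u = Y t" if "t \<in> K" "u \<in> G t" for t u
  proof -
    have "(SOME t. t \<in> K \<and> u \<in> G t) = t"
    proof (rule some_equality)
      show "t \<in> K \<and> u \<in> G t" using that by blast
      fix s assume "s \<in> K \<and> u \<in> G s" then show "s = t" using disj that by blast
    qed
    then show ?thesis unfolding X_def by simp
  qed
  have Xs: "X u \<in> sets UU" if "u \<in> J" for u
    using that Xp Y unfolding J_def by auto
  have Seq: "{\<sigma> \<in> space (weight_space V). \<forall>t\<in>K. \<forall>u\<in>G t. \<sigma> u \<in> Y t} = prod_emb V (\<lambda>_. UU) J (PiE J X)"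
  proof (intro set_eqI iffI)
    fix \<sigma> assume a: "\<sigma> \<in> {\<sigma> \<in> space (weight_space V). \<forall>t\<in>K. \<forall>u\<in>G t. \<sigma> u \<in> Y t}"
    then have "\<sigma> \<in> extensional V" unfolding space_ws by (simp add: PiE_def)
    moreover have "restrict \<sigma> J \<in> PiE J X"
      using a Xp unfolding J_def by (auto simp: PiE_def)
    ultimately show "\<sigma> \<in> prod_emb V (\<lambda>_. UU) J (PiE J X)" unfolding prod_emb_iff by simp
  next
    fix \<sigma> assume a: "\<sigma> \<in> prod_emb V (\<lambda>_. UU) J (PiE J X)"
    then have e: "\<sigma> \<in> extensional V" and r: "restrict \<sigma> J \<in> PiE J X" unfolding prod_emb_iff by auto
    have "\<sigma> \<in> space (weight_space V)" using e unfolding space_ws by (simp add: PiE_def)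
    moreover have "\<forall>t\<in>K. \<forall>u\<in>G t. \<sigma> u \<in> Y t"
    proof (intro ballI)
      fix t u assume "t \<in> K" "u \<in> G t"
      then have "u \<in> J" unfolding J_def by blast
      then have "\<sigma> u \<in> X u" using r by (auto simp: PiE_def Pi_def)
      then show "\<sigma> u \<in> Y t" using Xp \<open>t \<in> K\<close> \<open>u \<in> G t\<close> by simp
    qed
    ultimately show "\<sigma> \<in> {\<sigma> \<in> space (weight_space V). \<forall>t\<in>K. \<forall>u\<in>G t. \<sigma> u \<in> Y t}" by blast
  qed
  show "{\<sigma> \<in> space (weight_space V). \<forall>t\<in>K. \<forall>u\<in>G t. \<sigma> u \<in> Y t} \<in> sets (weight_space V)"
    unfolding Seq unfolding weight_space_def by (rule sets_PiM_I) (use finJ JV Xs in auto)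
  have em: "emeasure (weight_space V) (prod_emb V (\<lambda>_. UU) J (PiE J X)) = (\<Prod>u\<in>J. emeasure UU (X u))"
    unfolding weight_space_def by (rule emeasure_PiM_emb) (use UU_prob finJ JV Xs in auto)
  also have "\<dots> = (\<Prod>u\<in>J. ennreal (measure UU (X u)))"
  proof (intro prod.cong refl)
    interpret P: prob_space UU by (rule UU_prob)
    fix u show "emeasure UU (X u) = ennreal (measure UU (X u))" by (rule P.emeasure_eq_measure)
  qed
  also have "\<dots> = ennreal (\<Prod>u\<in>J. measure UU (X u))"
    by (rule prod_ennreal) simp
  finally have "measure (weight_space V) (prod_emb V (\<lambda>_. UU) J (PiE J X)) = (\<Prod>u\<in>J. measure UU (X u))"
    unfolding measure_def by (simp add: prod_nonneg)
  also have "\<dots> = (\<Prod>t\<in>K. \<Prod>u\<in>G t. measure UU (X u))"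
    unfolding J_def
  proof (rule prod.UNION_disjoint)
    show "finite K" by (rule K)
    show "\<forall>i\<in>K. finite (G i)" using GV V finite_subset by blast
    show "\<forall>i\<in>K. \<forall>j\<in>K. i \<noteq> j \<longrightarrow> G i \<inter> G j = {}" by (rule disj)
  qed
  also have "\<dots> = (\<Prod>t\<in>K. measure UU (Y t) ^ card (G t))"
  proof (rule prod.cong[OF refl])
    fix t assume "t \<in> K"
    then have "(\<Prod>u\<in>G t. measure UU (X u)) = (\<Prod>u\<in>G t. measure UU (Y t))"
      using Xp by (intro prod.cong refl) simp
    then show "(\<Prod>u\<in>G t. measure UU (X u)) = measure UU (Y t) ^ card (G t)" by simp
  qed
  finally show "measure (weight_space V) {\<sigma> \<in> space (weight_space V). \<forall>t\<in>K. \<forall>u\<in>G t. \<sigma> u \<in> Y t}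
         = (\<Prod>t\<in>K. measure UU (Y t) ^ card (G t))" unfolding Seq .
qed

lemma pow_exp_bound:
  fixes A x :: real
  assumes A: "A > 0" and x: "x \<ge> 0" and N: "N \<le> n"
  shows "(A + x) ^ N \<le> A ^ N * exp (real n * x / A)"
proof -
  have "A + x = A * (1 + x / A)" using A by (simp add: field_simps)
  then have "(A + x) ^ N = (A * (1 + x / A)) ^ N" by simp
  also have "\<dots> = A ^ N * (1 + x / A) ^ N" by (simp add: power_mult_distrib)
  also have "(1 + x / A) ^ N \<le> exp (x / A) ^ N"
    by (rule power_mono) (use A x in \<open>simp_all add: exp_ge_add_one_self\<close>)
  also have "exp (x / A) ^ N = exp (real N * (x / A))" using exp_of_nat_mult[of N "x / A"] by simp
  also have "\<dots> \<le> exp (real n * (x / A))"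
    using N A x by (intro exp_mono mult_right_mono) simp_all
  finally show ?thesis using A by (simp add: mult_left_mono)
qed

lemma sum_split0l:
  fixes g :: "nat \<Rightarrow> 'a::comm_monoid_add"
  assumes "1 \<le> l"
  shows "(\<Sum>j\<in>{0..l}. g j) = g 0 + (\<Sum>j\<in>{1..<l}. g j) + g l"
proof -
  have "(\<Sum>j\<in>{0..l}. g j) = g 0 + (\<Sum>j\<in>{Suc 0..l}. g j)" by (rule sum.atLeast_Suc_atMost) simp
  also have "(\<Sum>j\<in>{Suc 0..l}. g j) = g l + (\<Sum>j\<in>{Suc 0..<l}. g j)" using assms by (intro sum.last_plus) simp
  finally show ?thesis by (simp add: ac_simps)
qed

lemma prod_split0l:
  fixes g :: "nat \<Rightarrow> 'a::comm_monoid_mult"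
  assumes "1 \<le> l"
  shows "(\<Prod>j\<in>{0..l}. g j) = g 0 * (\<Prod>j\<in>{1..<l}. g j) * g l"
proof -
  have "(\<Prod>j\<in>{0..l}. g j) = g 0 * (\<Prod>j\<in>{Suc 0..l}. g j)" by (rule prod.atLeast_Suc_atMost) simp
  also have "(\<Prod>j\<in>{Suc 0..l}. g j) = g l * (\<Prod>j\<in>{Suc 0..<l}. g j)" using assms by (intro prod.last_plus) simp
  finally show ?thesis by (simp add: ac_simps)
qed

locale hyp = params +
  fixes V :: "nat set" and E :: "nat set set"
  assumes finV: "finite V" and Ecard: "\<forall>e\<in>E. e \<subseteq> V \<and> card e = n" and n2: "2 \<le> n"
begin

lemma stS_diff: "1 \<le> i \<Longrightarrow> stS r n i - stS r n (i - 1) = T"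
  unfolding stS_def by (simp add: of_nat_diff algebra_simps)

lemma caseA_bound:
  assumes eE: "e \<in> E"
  shows "{\<sigma> \<in> space (weight_space V). \<forall>u\<in>e. \<sigma> u \<in> BigI r n k} \<in> sets (weight_space V)"
    and "measure (weight_space V) {\<sigma> \<in> space (weight_space V). \<forall>u\<in>e. \<sigma> u \<in> BigI r n k} \<le> a ^ n"
proof -
  have eV: "e \<subseteq> V" and ce: "card e = n" using Ecard eE by auto
  have set_eq: "{\<sigma> \<in> space (weight_space V). \<forall>t\<in>{()}. \<forall>u\<in>(\<lambda>_. e) t. \<sigma> u \<in> (\<lambda>_. BigI r n k) t} =
     {\<sigma> \<in> space (weight_space V). \<forall>u\<in>e. \<sigma> u \<in> BigI r n k}" by simp
  have bor: "BigI r n k \<in> sets borel" unfolding BigI_eq by simp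
  have h1: "finite {()}" "\<forall>t\<in>{()}. (\<lambda>_. e) t \<subseteq> V" "\<forall>s\<in>{()}. \<forall>t\<in>{()}. s \<noteq> t \<longrightarrow> (\<lambda>_. e) s \<inter> (\<lambda>_. e) t = {}"
     "\<forall>t\<in>{()}. (\<lambda>_. BigI r n k) t \<in> sets borel" using eV bor by auto
  note BM = box_measure[OF finV h1]
  show "{\<sigma> \<in> space (weight_space V). \<forall>u\<in>e. \<sigma> u \<in> BigI r n k} \<in> sets (weight_space V)"
    using BM(1) unfolding set_eq .
  have meq: "measure (weight_space V) {\<sigma> \<in> space (weight_space V). \<forall>u\<in>e. \<sigma> u \<in> BigI r n k} = measure UU (BigI r n k) ^ n"
    using BM(2) unfolding set_eq using ce by simp
  have "measure UU (BigI r n k) \<le> a"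
    unfolding BigI_eq using UU_Ico[of "(real k - 1) * T" "(real k - 1) * T + a"] a_pos by simp
  then have "measure UU (BigI r n k) ^ n \<le> a ^ n" by (intro power_mono) simp_all
  then show "measure (weight_space V) {\<sigma> \<in> space (weight_space V). \<forall>u\<in>e. \<sigma> u \<in> BigI r n k} \<le> a ^ n"
    unfolding meq .
qed

lemma box_bound:
  assumes val: "validc E l es" and k: "2 \<le> k" "k \<le> r" and l: "1 \<le> l" "l < k" and m: "m \<ge> 1"
    and ss: "ss \<in> PiE {1..l} (\<lambda>_. {..<m})"
  shows "boxc V r n m k l es ss \<in> sets (weight_space V)"
    and "measure (weight_space V) (boxc V r n m k l es ss)
          \<le> hh r n m ^ l * a ^ ((l + 1) * n - 2 * l) * exp (real n * (real l * (b + hh r n m)) / a)"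
proof -
  let ?h = "hh r n m"
  have h: "?h > 0" using hh_pos[OF m] .
  have mh: "real m * ?h = b" unfolding hh_def using m by simp
  have VV: "(\<forall>j\<in>{0..l}. es j \<in> E) \<and> (\<forall>j\<in>{1..l}. \<exists>w. es (j - 1) \<inter> es j = {w}) \<and>
     inj_on (Wf es) {1..l} \<and> (\<forall>i\<in>{0..l}. \<forall>j\<in>{0..l}. i \<noteq> j \<longrightarrow> Dset l es i \<inter> Dset l es j = {}) \<and>
     (\<forall>j\<in>{0..l}. Dset l es j \<inter> Wf es ` {1..l} = {})" using val unfolding validc_def .
  note esE = conjunct1[OF VV]
  note sing = conjunct1[OF conjunct2[OF VV]]
  note injW = conjunct1[OF conjunct2[OF conjunct2[OF VV]]]
  note disjD = conjunct1[OF conjunct2[OF conjunct2[OF conjunct2[OF VV]]]]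
  note disjW = conjunct2[OF conjunct2[OF conjunct2[OF conjunct2[OF VV]]]]
  have Wmem: "Wf es j \<in> es j" if "j \<in> {1..l}" for j
  proof -
    have "\<exists>w. es (j - 1) \<inter> es j = {w}" using bspec[OF sing that] .
    then obtain w where w: "es (j - 1) \<inter> es j = {w}" by (elim exE)
    then have "w \<in> es j" by (metis IntD2 insertI1)
    moreover have "Wf es j = w" unfolding Wf_def w by simp
    ultimately show ?thesis by simp
  qed
  have esV: "es j \<subseteq> V" and esc: "card (es j) = n" if "j \<in> {0..l}" for j
  proof -
    have "es j \<in> E" using esE that by blast
    then show "es j \<subseteq> V" "card (es j) = n" using Ecard by blast+
  qed
  have GV: "\<forall>t\<in>Kc l. Gc l es t \<subseteq> V"
  proof
    fix t assume t: "t \<in> Kc l"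
    show "Gc l es t \<subseteq> V"
    proof (cases t)
      case (Inl j)
      then have j: "j \<in> {1..l}" using t unfolding Kc_def by auto
      then have "Wf es j \<in> es j" by (rule Wmem)
      moreover have "es j \<subseteq> V" using esV j by simp
      ultimately show ?thesis using Inl unfolding Gc_def by auto
    next
      case (Inr j)
      then have j: "j \<in> {0..l}" using t unfolding Kc_def by auto
      have "Dset l es j \<subseteq> es j" unfolding Dset_def by blast
      then show ?thesis using Inr esV[OF j] unfolding Gc_def by auto
    qed
  qed
  have disjG: "\<forall>s\<in>Kc l. \<forall>t\<in>Kc l. s \<noteq> t \<longrightarrow> Gc l es s \<inter> Gc l es t = {}"
  proof (intro ballI impI)
    fix s t assume s: "s \<in> Kc l" and t: "t \<in> Kc l" and st: "s \<noteq> t"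
    show "Gc l es s \<inter> Gc l es t = {}"
    proof (cases s)
      case (Inl i)
      note si = Inl
      show ?thesis
      proof (cases t)
        case (Inl j)
        then have "i \<noteq> j" "i \<in> {1..l}" "j \<in> {1..l}" using si st s t unfolding Kc_def by auto
        then have "Wf es i \<noteq> Wf es j" using injW unfolding inj_on_def by blast
        then show ?thesis using si Inl unfolding Gc_def by simp
      next
        case (Inr j)
        then have ij: "i \<in> {1..l}" "j \<in> {0..l}" using si s t unfolding Kc_def by auto
        have D: "Dset l es j \<inter> Wf es ` {1..l} = {}" using bspec[OF disjW ij(2)] .
        have "Wf es i \<in> Wf es ` {1..l}" using ij(1) by (rule imageI)
        then have "Wf es i \<notin> Dset l es j" using D by blast
        then show ?thesis using si Inr unfolding Gc_def by simp
      qed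
    next
      case (Inr i)
      note si = Inr
      show ?thesis
      proof (cases t)
        case (Inl j)
        then have ij: "j \<in> {1..l}" "i \<in> {0..l}" using si s t unfolding Kc_def by auto
        have D: "Dset l es i \<inter> Wf es ` {1..l} = {}" using bspec[OF disjW ij(2)] .
        have "Wf es j \<in> Wf es ` {1..l}" using ij(1) by (rule imageI)
        then have "Wf es j \<notin> Dset l es i" using D by blast
        then show ?thesis using si Inl unfolding Gc_def by simp
      next
        case (Inr j)
        then have "i \<noteq> j" "i \<in> {0..l}" "j \<in> {0..l}" using si st s t unfolding Kc_def by auto
        then show ?thesis using disjD si Inr unfolding Gc_def by auto
      qed
    qed
  qed
  have Yb: "\<forall>t\<in>Kc l. Yc r n m k l ss t \<in> sets borel"
    unfolding Yc_def piece_def by (auto split: sum.splits)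
  have finK: "finite (Kc l)" unfolding Kc_def by simp
  note BM = box_measure[OF finV finK GV disjG Yb]
  show "boxc V r n m k l es ss \<in> sets (weight_space V)" using BM(1) unfolding boxc_def .
  have meq: "measure (weight_space V) (boxc V r n m k l es ss) = (\<Prod>t\<in>Kc l. measure UU (Yc r n m k l ss t) ^ card (Gc l es t))"
    using BM(2) unfolding boxc_def .
  also have "\<dots> = (\<Prod>j\<in>{1..l}. measure UU (piece r n m (k - j) (ss j)) ^ card {Wf es j}) *
                  (\<Prod>j\<in>{0..l}. measure UU {LoP r n m k l ss j ..< HiP r n m k ss j} ^ card (Dset l es j))"
  proof -
    have "(\<Prod>t\<in>Kc l. measure UU (Yc r n m k l ss t) ^ card (Gc l es t)) =
      (\<Prod>t\<in>Inl ` {1..l}. measure UU (Yc r n m k l ss t) ^ card (Gc l es t)) *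
      (\<Prod>t\<in>Inr ` {0..l}. measure UU (Yc r n m k l ss t) ^ card (Gc l es t))"
      unfolding Kc_def by (rule prod.union_disjoint) auto
    also have "(\<Prod>t\<in>Inl ` {1..l}. measure UU (Yc r n m k l ss t) ^ card (Gc l es t)) =
       (\<Prod>j\<in>{1..l}. measure UU (piece r n m (k - j) (ss j)) ^ card {Wf es j})"
      by (subst prod.reindex) (auto simp: Yc_def Gc_def)
    also have "(\<Prod>t\<in>Inr ` {0..l}. measure UU (Yc r n m k l ss t) ^ card (Gc l es t)) =
       (\<Prod>j\<in>{0..l}. measure UU {LoP r n m k l ss j ..< HiP r n m k ss j} ^ card (Dset l es j))"
      by (subst prod.reindex) (auto simp: Yc_def Gc_def)
    finally show ?thesis .
  qed
  finally have meq2: "measure (weight_space V) (boxc V r n m k l es ss) = (\<Prod>j\<in>{1..l}. measure UU (piece r n m (k - j) (ss j)) ^ card {Wf es j}) *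
                  (\<Prod>j\<in>{0..l}. measure UU {LoP r n m k l ss j ..< HiP r n m k ss j} ^ card (Dset l es j))" .
  have P1: "(\<Prod>j\<in>{1..l}. measure UU (piece r n m (k - j) (ss j)) ^ card {Wf es j}) \<le> ?h ^ l"
  proof -
    have "(\<Prod>j\<in>{1..l}. measure UU (piece r n m (k - j) (ss j)) ^ card {Wf es j}) \<le> (\<Prod>j\<in>{1..l}. ?h)"
    proof (rule prod_mono)
      fix j assume "j \<in> {1..l}"
      have "measure UU (piece r n m (k - j) (ss j)) \<le> ?h"
        unfolding piece_def using UU_Ico[of "stS r n (k - j) + real (ss j) * ?h" "stS r n (k - j) + (real (ss j) + 1) * ?h"] h
        by (simp add: algebra_simps)
      then show "0 \<le> measure UU (piece r n m (k - j) (ss j)) ^ card {Wf es j} \<and>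
                 measure UU (piece r n m (k - j) (ss j)) ^ card {Wf es j} \<le> ?h" by simp
    qed
    then show ?thesis by simp
  qed
  define f where "f j = real (ss j) * ?h" for j
  have f0: "0 \<le> f j" for j unfolding f_def using h by simp
  have fb: "f j \<le> b - ?h" if "j \<in> {1..l}" for j
  proof -
    have "ss j \<le> m - 1" using ss that by (auto simp: PiE_def Pi_def)
    then have "real (ss j) \<le> real m - 1" using m by linarith
    then have "real (ss j) * ?h \<le> (real m - 1) * ?h" using h by (simp add: mult_right_mono)
    then show ?thesis unfolding f_def using mh by (simp add: algebra_simps)
  qed
  define x where "x j = (if j = 0 then b - f 1 else if j < l then b + ?h + f j - f (Suc j) else ?h + f l)" for j
  define N where "N j = (if j = 0 \<or> j = l then n - 1 else n - 2)" for j
  have len: "HiP r n m k ss j - LoP r n m k l ss j = a + x j" if j: "j \<in> {0..l}" for j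
  proof (cases "j = 0")
    case True
    have "stS r n k - stS r n (k - 1) = T" using stS_diff k by simp
    then show ?thesis using True l unfolding HiP_def LoP_def x_def f_def by (simp add: algebra_simps)
  next
    case False
    show ?thesis
    proof (cases "j < l")
      case True
      have "stS r n (k - j) - stS r n (k - j - 1) = T" using stS_diff[of "k - j"] True l by simp
      then show ?thesis using True False unfolding HiP_def LoP_def x_def f_def by (simp add: algebra_simps)
    next
      case F2: False
      then have jl: "j = l" using j by simp
      have "real (k - l) * T - T + a = stS r n (k - l)" unfolding stS_def by simp
      then show ?thesis using jl False unfolding HiP_def LoP_def x_def f_def by (simp add: algebra_simps)
    qed
  qed
  have x0: "0 \<le> x j" if "j \<in> {0..l}" for j
  proof -
    have "0 \<le> b - f 1" using fb[of 1] l h by simp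
    moreover have "0 \<le> b + ?h + f j - f (Suc j)" if "j < l" using fb[of "Suc j"] that f0[of j] h by simp
    moreover have "0 \<le> ?h + f l" using f0 h by (simp add: add_nonneg_nonneg)
    ultimately show ?thesis unfolding x_def by auto
  qed
  have cardD: "N j \<le> card (Dset l es j)" if j: "j \<in> {0..l}" for j
  proof -
    let ?S = "{j, Suc j} \<inter> {1..l}"
    have cS: "card ?S \<le> (if j = 0 \<or> j = l then 1 else 2)"
    proof (cases "j = 0 \<or> j = l")
      case True
      then have "?S = {if j = 0 then 1 else l}" using l by auto
      then show ?thesis using True by simp
    next
      case False
      have "card ?S \<le> card {j, Suc j}" by (rule card_mono) auto
      also have "\<dots> \<le> 2" by (simp add: card_insert_if)
      finally show ?thesis using False by simp
    qed
    have "card (es j) - card (Wf es ` ?S) \<le> card (Dset l es j)"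
      unfolding Dset_def by (rule diff_card_le_card_Diff) simp
    moreover have "card (Wf es ` ?S) \<le> card ?S" by (rule card_image_le) simp
    ultimately show ?thesis using cS esc[OF j] unfolding N_def by (auto split: if_splits)
  qed
  have P2: "(\<Prod>j\<in>{0..l}. measure UU {LoP r n m k l ss j ..< HiP r n m k ss j} ^ card (Dset l es j))
            \<le> (\<Prod>j\<in>{0..l}. a ^ N j * exp (real n * x j / a))"
  proof (rule prod_mono)
    fix j assume j: "j \<in> {0..l}"
    let ?mu = "measure UU {LoP r n m k l ss j ..< HiP r n m k ss j}"
    have le: "?mu \<le> a + x j" using UU_Ico[of "LoP r n m k l ss j" "HiP r n m k ss j"] len[OF j] x0[OF j] a_pos by simp
    have "?mu ^ card (Dset l es j) \<le> ?mu ^ N j"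
      by (rule power_decreasing[OF cardD[OF j] UU_nonneg UU_le1])
    also have "\<dots> \<le> (a + x j) ^ N j" by (rule power_mono) (use le in auto)
    also have "\<dots> \<le> a ^ N j * exp (real n * x j / a)"
      by (rule pow_exp_bound) (use a_pos x0[OF j] in \<open>auto simp: N_def\<close>)
    finally show "0 \<le> ?mu ^ card (Dset l es j) \<and> ?mu ^ card (Dset l es j) \<le> a ^ N j * exp (real n * x j / a)"
      by simp
  qed
  have sumx: "(\<Sum>j\<in>{0..l}. x j) = real l * (b + ?h)"
  proof -
    have "(\<Sum>j\<in>{0..l}. x j) = x 0 + (\<Sum>j\<in>{1..<l}. x j) + x l" using sum_split0l[OF l(1)] .
    also have "(\<Sum>j\<in>{1..<l}. x j) = (\<Sum>j\<in>{1..<l}. (b + ?h) - (f (Suc j) - f j))"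
      unfolding x_def by (intro sum.cong refl) auto
    also have "\<dots> = (\<Sum>j\<in>{1..<l}. (b + ?h)) - (\<Sum>j\<in>{1..<l}. f (Suc j) - f j)"
      by (rule sum_subtractf)
    also have "(\<Sum>j\<in>{1..<l}. f (Suc j) - f j) = f l - f 1" using sum_Suc_diff'[of 1 l f] l by simp
    also have "(\<Sum>j\<in>{1..<l}. (b + ?h)) = real (l - 1) * (b + ?h)" by simp
    finally show ?thesis using l unfolding x_def by (simp add: of_nat_diff algebra_simps)
  qed
  have sumN: "(\<Sum>j\<in>{0..l}. N j) = (l + 1) * n - 2 * l"
  proof -
    have "(\<Sum>j\<in>{0..l}. N j) = N 0 + (\<Sum>j\<in>{1..<l}. N j) + N l" using sum_split0l[OF l(1)] .
    also have "(\<Sum>j\<in>{1..<l}. N j) = (\<Sum>j\<in>{1..<l}. n - 2)" unfolding N_def by (intro sum.cong refl) auto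
    finally have "(\<Sum>j\<in>{0..l}. N j) = (n - 1) + (l - 1) * (n - 2) + (n - 1)" using l unfolding N_def by simp
    also have "\<dots> = (l + 1) * n - 2 * l" using l n2
    proof -
      obtain l' where "l = Suc l'" using l by (cases l) auto
      moreover obtain n' where "n = n' + 2" using n2 by (metis add.commute le_Suc_ex)
      ultimately show ?thesis by (simp add: algebra_simps)
    qed
    finally show ?thesis .
  qed
  have P3: "(\<Prod>j\<in>{0..l}. a ^ N j * exp (real n * x j / a)) = a ^ ((l + 1) * n - 2 * l) * exp (real n * (real l * (b + ?h)) / a)"
  proof -
    have "(\<Prod>j\<in>{0..l}. a ^ N j * exp (real n * x j / a)) = (\<Prod>j\<in>{0..l}. a ^ N j) * (\<Prod>j\<in>{0..l}. exp (real n * x j / a))"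
      by (rule prod.distrib)
    also have "(\<Prod>j\<in>{0..l}. a ^ N j) = a ^ (\<Sum>j\<in>{0..l}. N j)" by (simp add: power_sum)
    also have "(\<Prod>j\<in>{0..l}. exp (real n * x j / a)) = exp (\<Sum>j\<in>{0..l}. real n * x j / a)" by (simp add: exp_sum)
    also have "(\<Sum>j\<in>{0..l}. real n * x j / a) = real n * (\<Sum>j\<in>{0..l}. x j) / a"
      by (simp add: sum_divide_distrib sum_distrib_left)
    finally show ?thesis unfolding sumx sumN .
  qed
  have nn: "0 \<le> (\<Prod>j\<in>{0..l}. measure UU {LoP r n m k l ss j ..< HiP r n m k ss j} ^ card (Dset l es j))"
    by (simp add: prod_nonneg)
  have "measure (weight_space V) (boxc V r n m k l es ss) \<le> ?h ^ l * (\<Prod>j\<in>{0..l}. a ^ N j * exp (real n * x j / a))"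
    unfolding meq2 using P1 P2 nn h by (intro mult_mono) (simp_all add: prod_nonneg)
  then show "measure (weight_space V) (boxc V r n m k l es ss)
          \<le> ?h ^ l * a ^ ((l + 1) * n - 2 * l) * exp (real n * (real l * (b + ?h)) / a)"
    unfolding P3 by (simp add: mult.assoc)
qed

end

definition sigf :: "nat \<Rightarrow> nat \<Rightarrow> nat set \<Rightarrow> (nat \<Rightarrow> real) \<Rightarrow> (nat \<times> nat \<Rightarrow> bool) \<times> (nat \<times> nat \<Rightarrow> bool) \<times> (nat \<times> nat \<Rightarrow> bool)" where
  "sigf r n V \<sigma> = ((\<lambda>(v, i). v \<in> V \<and> i \<in> {1..r} \<and> \<sigma> v \<in> BigI r n i),
                   (\<lambda>(v, i). v \<in> V \<and> i \<in> {1..<r} \<and> \<sigma> v \<in> SmallI r n i),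
                   (\<lambda>(u, v). u \<in> V \<and> v \<in> V \<and> \<sigma> u < \<sigma> v))"

lemma sigf_eq_iff:
  "sigf r n V \<sigma> = sigf r n V \<sigma>' \<longleftrightarrow>
    (\<forall>v\<in>V. \<forall>i\<in>{1..r}. (\<sigma> v \<in> BigI r n i) = (\<sigma>' v \<in> BigI r n i)) \<and>
    (\<forall>v\<in>V. \<forall>i\<in>{1..<r}. (\<sigma> v \<in> SmallI r n i) = (\<sigma>' v \<in> SmallI r n i)) \<and>
    (\<forall>u\<in>V. \<forall>v\<in>V. (\<sigma> u < \<sigma> v) = (\<sigma>' u < \<sigma>' v))"
  (is "?L \<longleftrightarrow> ?R")
proof
  assume L: ?L
  have "\<And>x. (case x of (v, i) \<Rightarrow> v \<in> V \<and> i \<in> {1..r} \<and> \<sigma> v \<in> BigI r n i) = (case x of (v, i) \<Rightarrow> v \<in> V \<and> i \<in> {1..r} \<and> \<sigma>' v \<in> BigI r n i)"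
    using L unfolding sigf_def by (simp add: fun_eq_iff)
  moreover have "\<And>x. (case x of (v, i) \<Rightarrow> v \<in> V \<and> i \<in> {1..<r} \<and> \<sigma> v \<in> SmallI r n i) = (case x of (v, i) \<Rightarrow> v \<in> V \<and> i \<in> {1..<r} \<and> \<sigma>' v \<in> SmallI r n i)"
    using L unfolding sigf_def by (simp add: fun_eq_iff)
  moreover have "\<And>x. (case x of (u, v) \<Rightarrow> u \<in> V \<and> v \<in> V \<and> \<sigma> u < \<sigma> v) = (case x of (u, v) \<Rightarrow> u \<in> V \<and> v \<in> V \<and> \<sigma>' u < \<sigma>' v)"
    using L unfolding sigf_def by (simp add: fun_eq_iff)
  ultimately show ?R
    apply (intro conjI ballI)
    subgoal for v i by (drule_tac x="(v,i)" in meta_spec) simp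
    subgoal for v i by (drule_tac x="(v,i)" in meta_spec, drule_tac x="(v,i)" in meta_spec) simp
    subgoal for u v by (drule_tac x="(u,v)" in meta_spec, drule_tac x="(u,v)" in meta_spec, drule_tac x="(u,v)" in meta_spec) simp
    done
next
  assume R: ?R
  show ?L unfolding sigf_def using R by (auto simp: fun_eq_iff)
qed

lemma finite_bool_funs:
  assumes "finite S"
  shows "finite {f :: 'a \<Rightarrow> bool. \<forall>x. f x \<longrightarrow> x \<in> S}"
proof -
  have "{f :: 'a \<Rightarrow> bool. \<forall>x. f x \<longrightarrow> x \<in> S} \<subseteq> (\<lambda>B x. x \<in> B) ` Pow S"
  proof
    fix f :: "'a \<Rightarrow> bool" assume "f \<in> {f. \<forall>x. f x \<longrightarrow> x \<in> S}"
    then have "{x. f x} \<in> Pow S" "f = (\<lambda>x. x \<in> {x. f x})" by auto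
    then show "f \<in> (\<lambda>B x. x \<in> B) ` Pow S" by blast
  qed
  then show ?thesis using assms by (meson finite_Pow_iff finite_imageI finite_subset)
qed

lemma finite_sigf:
  assumes "finite V"
  shows "finite (range (sigf r n V))"
proof -
  let ?A = "{f :: nat \<times> nat \<Rightarrow> bool. \<forall>x. f x \<longrightarrow> x \<in> V \<times> {1..r}}"
  let ?B = "{f :: nat \<times> nat \<Rightarrow> bool. \<forall>x. f x \<longrightarrow> x \<in> V \<times> {1..<r}}"
  let ?C = "{f :: nat \<times> nat \<Rightarrow> bool. \<forall>x. f x \<longrightarrow> x \<in> V \<times> V}"
  have "range (sigf r n V) \<subseteq> ?A \<times> ?B \<times> ?C" unfolding sigf_def by auto
  moreover have "finite (?A \<times> ?B \<times> ?C)"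
    by (intro finite_cartesian_product finite_bool_funs) (simp_all add: assms)
  ultimately show ?thesis by (rule finite_subset)
qed

lemma fiber_meas:
  assumes V: "finite V"
  shows "{\<sigma> \<in> space (weight_space V). sigf r n V \<sigma> = sigf r n V \<sigma>0} \<in> sets (weight_space V)"
proof -
  have eq: "{\<sigma> \<in> space (weight_space V). sigf r n V \<sigma> = sigf r n V \<sigma>0} =
    {\<sigma> \<in> space (weight_space V). (\<forall>v\<in>V. \<forall>i\<in>{1..r}. (\<sigma> v \<in> BigI r n i) = (\<sigma>0 v \<in> BigI r n i)) \<and>
    (\<forall>v\<in>V. \<forall>i\<in>{1..<r}. (\<sigma> v \<in> SmallI r n i) = (\<sigma>0 v \<in> SmallI r n i)) \<and>
    (\<forall>u\<in>V. \<forall>v\<in>V. (\<sigma> u < \<sigma> v) = (\<sigma>0 u < \<sigma>0 v))}"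
    unfolding sigf_eq_iff ..
  have bB: "BigI r n i \<in> sets borel" for i unfolding BigI_def Let_def by simp
  have bS: "SmallI r n i \<in> sets borel" for i unfolding SmallI_def Let_def by simp
  have "Measurable.pred (weight_space V) (\<lambda>\<sigma>. (\<forall>v\<in>V. \<forall>i\<in>{1..r}. (\<sigma> v \<in> BigI r n i) = (\<sigma>0 v \<in> BigI r n i)) \<and>
    (\<forall>v\<in>V. \<forall>i\<in>{1..<r}. (\<sigma> v \<in> SmallI r n i) = (\<sigma>0 v \<in> SmallI r n i)) \<and>
    (\<forall>u\<in>V. \<forall>v\<in>V. (\<sigma> u < \<sigma> v) = (\<sigma>0 u < \<sigma>0 v)))"
    unfolding weight_space_def using V bB bS by measurable
  then show ?thesis unfolding eq by (rule pred_def[THEN iffD1])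
qed


lemma alg_inv:
  assumes EV: "\<forall>e\<in>E. e \<subseteq> V" and sg: "sigf r n V \<sigma> = sigf r n V \<sigma>'"
  shows "alg1_output r n V E \<sigma> c = alg1_output r n V E \<sigma>' c"
proof -
  have B: "\<forall>v\<in>V. \<forall>i\<in>{1..r}. (\<sigma> v \<in> BigI r n i) = (\<sigma>' v \<in> BigI r n i)"
    and S: "\<forall>v\<in>V. \<forall>i\<in>{1..<r}. (\<sigma> v \<in> SmallI r n i) = (\<sigma>' v \<in> SmallI r n i)"
    and O: "\<forall>u\<in>V. \<forall>v\<in>V. (\<sigma> u < \<sigma> v) = (\<sigma>' u < \<sigma>' v)"
    using sg unfolding sigf_eq_iff by blast+
  have AC: "already_colored r n \<sigma> v u = already_colored r n \<sigma>' v u" if "u \<in> V" "v \<in> V" for u v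
  proof -
    have "(\<exists>j\<in>{1..r}. \<sigma> u \<in> BigI r n j) = (\<exists>j\<in>{1..r}. \<sigma>' u \<in> BigI r n j)"
      using bspec[OF B that(1)] by (intro bex_cong refl) blast
    moreover have "(\<exists>j\<in>{1..<r}. \<sigma> u \<in> SmallI r n j) = (\<exists>j\<in>{1..<r}. \<sigma>' u \<in> SmallI r n j)"
      using bspec[OF S that(1)] by (intro bex_cong refl) blast
    moreover have "(\<sigma> u < \<sigma> v) = (\<sigma>' u < \<sigma>' v)" using O that by blast
    ultimately show ?thesis unfolding already_colored_def by (simp only:)
  qed
  have c1: "(\<forall>v\<in>V. \<forall>i\<in>{1..r}. \<sigma> v \<in> BigI r n i \<longrightarrow> c v = i) = (\<forall>v\<in>V. \<forall>i\<in>{1..r}. \<sigma>' v \<in> BigI r n i \<longrightarrow> c v = i)"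
  proof (rule ball_cong[OF refl], rule ball_cong[OF refl])
    fix v i assume "v \<in> V" "i \<in> {1..r}"
    then have "(\<sigma> v \<in> BigI r n i) = (\<sigma>' v \<in> BigI r n i)" using B by blast
    then show "(\<sigma> v \<in> BigI r n i \<longrightarrow> c v = i) = (\<sigma>' v \<in> BigI r n i \<longrightarrow> c v = i)" by (simp only:)
  qed
  have c2: "(\<forall>v\<in>V. \<forall>i\<in>{1..<r}. \<sigma> v \<in> SmallI r n i \<longrightarrow>
        c v = (if \<exists>e\<in>E. v \<in> e \<and> (\<forall>u\<in>e - {v}. already_colored r n \<sigma> v u \<and> c u = i) then i + 1 else i)) =
     (\<forall>v\<in>V. \<forall>i\<in>{1..<r}. \<sigma>' v \<in> SmallI r n i \<longrightarrow>
        c v = (if \<exists>e\<in>E. v \<in> e \<and> (\<forall>u\<in>e - {v}. already_colored r n \<sigma>' v u \<and> c u = i) then i + 1 else i))"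
  proof (rule ball_cong[OF refl], rule ball_cong[OF refl])
    fix v i assume v: "v \<in> V" and i: "i \<in> {1..<r}"
    have s1: "(\<sigma> v \<in> SmallI r n i) = (\<sigma>' v \<in> SmallI r n i)" using S v i by blast
    have s2: "(\<exists>e\<in>E. v \<in> e \<and> (\<forall>u\<in>e - {v}. already_colored r n \<sigma> v u \<and> c u = i)) =
              (\<exists>e\<in>E. v \<in> e \<and> (\<forall>u\<in>e - {v}. already_colored r n \<sigma>' v u \<and> c u = i))"
    proof (rule bex_cong[OF refl], rule conj_cong[OF refl], rule ball_cong[OF refl])
      fix e u assume "e \<in> E" "u \<in> e - {v}"
      then have "u \<in> V" using EV by blast
      then have "already_colored r n \<sigma> v u = already_colored r n \<sigma>' v u" using AC v by blast
      then show "(already_colored r n \<sigma> v u \<and> c u = i) = (already_colored r n \<sigma>' v u \<and> c u = i)" by (simp only:)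
    qed
    show "(\<sigma> v \<in> SmallI r n i \<longrightarrow>
        c v = (if \<exists>e\<in>E. v \<in> e \<and> (\<forall>u\<in>e - {v}. already_colored r n \<sigma> v u \<and> c u = i) then i + 1 else i)) =
       (\<sigma>' v \<in> SmallI r n i \<longrightarrow>
        c v = (if \<exists>e\<in>E. v \<in> e \<and> (\<forall>u\<in>e - {v}. already_colored r n \<sigma>' v u \<and> c u = i) then i + 1 else i))"
      by (simp only: s1 s2)
  qed
  show ?thesis unfolding alg1_output_def by (simp only: c1 c2)
qed

lemma C0_inv:
  assumes EV: "\<forall>e\<in>E. e \<subseteq> V" and sg: "sigf r n V \<sigma> = sigf r n V \<sigma>'"
  shows "C0 r n V E \<sigma> = C0 r n V E \<sigma>'"
proof -
  have "alg1_output r n V E \<sigma> = alg1_output r n V E \<sigma>'" using alg_inv[OF EV sg] by (intro ext) blast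
  then show ?thesis unfolding C0_def by simp
qed

lemma inj_inv:
  assumes sg: "sigf r n V \<sigma> = sigf r n V \<sigma>'"
  shows "inj_on \<sigma> V = inj_on \<sigma>' V"
proof -
  have O: "\<forall>u\<in>V. \<forall>v\<in>V. (\<sigma> u < \<sigma> v) = (\<sigma>' u < \<sigma>' v)" using sg unfolding sigf_eq_iff by blast
  have "(\<sigma> u = \<sigma> v) = (\<sigma>' u = \<sigma>' v)" if "u \<in> V" "v \<in> V" for u v
  proof -
    have "(\<sigma> u = \<sigma> v) = (\<not> \<sigma> u < \<sigma> v \<and> \<not> \<sigma> v < \<sigma> u)" by auto
    also have "\<dots> = (\<not> \<sigma>' u < \<sigma>' v \<and> \<not> \<sigma>' v < \<sigma>' u)" using O that by blast
    also have "\<dots> = (\<sigma>' u = \<sigma>' v)" by auto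
    finally show ?thesis .
  qed
  then show ?thesis unfolding inj_on_def by blast
qed

lemma A_meas:
  assumes V: "finite (V::nat set)" and EV: "\<forall>e\<in>E. e \<subseteq> V"
  shows "{\<sigma> \<in> space (weight_space V). inj_on \<sigma> V \<and> has_mono_edge E (C0 r n V E \<sigma>)} \<in> sets (weight_space V)"
proof -
  let ?A = "{\<sigma> \<in> space (weight_space V). inj_on \<sigma> V \<and> has_mono_edge E (C0 r n V E \<sigma>)}"
  let ?F = "\<lambda>s. {\<sigma> \<in> space (weight_space V). sigf r n V \<sigma> = s}"
  have eq: "?A = (\<Union>s\<in>sigf r n V ` ?A. ?F s)"
  proof
    show "?A \<subseteq> (\<Union>s\<in>sigf r n V ` ?A. ?F s)" by blast
    show "(\<Union>s\<in>sigf r n V ` ?A. ?F s) \<subseteq> ?A"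
    proof
      fix \<sigma> assume "\<sigma> \<in> (\<Union>s\<in>sigf r n V ` ?A. ?F s)"
      then obtain \<sigma>0 where s0: "\<sigma>0 \<in> ?A" and sp: "\<sigma> \<in> space (weight_space V)" and sg: "sigf r n V \<sigma> = sigf r n V \<sigma>0"
        by blast
      have "C0 r n V E \<sigma> = C0 r n V E \<sigma>0" by (rule C0_inv[OF EV sg])
      moreover have "inj_on \<sigma> V = inj_on \<sigma>0 V" by (rule inj_inv[OF sg])
      ultimately show "\<sigma> \<in> ?A" using s0 sp by simp
    qed
  qed
  have fin: "finite (sigf r n V ` ?A)" using finite_sigf[OF V] by (rule finite_subset[rotated]) blast
  have "(\<Union>s\<in>sigf r n V ` ?A. ?F s) \<in> sets (weight_space V)"
  proof (rule sets.finite_UN[OF fin])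
    fix s assume "s \<in> sigf r n V ` ?A"
    then obtain \<sigma>0 where "s = sigf r n V \<sigma>0" by blast
    then show "?F s \<in> sets (weight_space V)" using fiber_meas[OF V] by simp
  qed
  then show ?thesis using eq by simp
qed

lemma ws_prob: "prob_space (weight_space V)"
  unfolding weight_space_def by (rule prob_space_PiM) (rule UU_prob)

lemma chainP_restrict:
  assumes "chainP r n E \<sigma> k l es W"
  shows "chainP r n E \<sigma> k l (restrict es {0..l}) W"
proof -
  have r: "restrict es {0..l} j = es j" if "j \<le> l" for j using that by simp
  have r': "restrict es {0..l} (j - 1) = es (j - 1)" if "j \<le> l" for j
  proof -
    have "j - 1 \<le> l" using that by arith
    then show ?thesis by simp
  qed
  show ?thesis using assms unfolding chainP_def
    apply (elim conjE)
    apply (intro conjI)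
    subgoal by simp
    subgoal premises P
    proof
      fix j assume j: "j \<in> {1..l}"
      then have jl: "j \<le> l" by simp
      have "W j \<in> es (j - 1) \<and> W j \<in> es j \<and> \<sigma> (W j) \<in> SmallI r n (k - j)" using P(2) j by blast
      then show "W j \<in> restrict es {0..l} (j - 1) \<and> W j \<in> restrict es {0..l} j \<and> \<sigma> (W j) \<in> SmallI r n (k - j)"
        unfolding r[OF jl] r'[OF jl] .
    qed
    subgoal by simp
    subgoal by simp
    subgoal by simp
    done
qed

context hyp
begin

definition "Bad = {\<sigma> \<in> space (weight_space V). \<exists>v\<in>V. \<sigma> v \<notin> {0..<1}}"
definition "CA k e = {\<sigma> \<in> space (weight_space V). \<forall>u\<in>e. \<sigma> u \<in> BigI r n k}"
definition "BV m k l es ss = (if validc E l es then boxc V r n m k l es ss else {})"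

lemma EV: "\<forall>e\<in>E. e \<subseteq> V" using Ecard by blast

lemma inclusion:
  assumes m: "m \<ge> 1"
  shows "{\<sigma> \<in> space (weight_space V). inj_on \<sigma> V \<and> has_mono_edge E (C0 r n V E \<sigma>)} \<subseteq>
    Bad \<union> (\<Union>k\<in>{1..r}. \<Union>e\<in>E. CA k e) \<union>
    (\<Union>k\<in>{2..r}. \<Union>l\<in>{1..<k}. \<Union>es\<in>PiE {0..l} (\<lambda>_. E). \<Union>ss\<in>PiE {1..l} (\<lambda>_. {..<m}). BV m k l es ss)"
proof
  fix \<sigma> assume A: "\<sigma> \<in> {\<sigma> \<in> space (weight_space V). inj_on \<sigma> V \<and> has_mono_edge E (C0 r n V E \<sigma>)}"
  then have sp: "\<sigma> \<in> space (weight_space V)" and inj: "inj_on \<sigma> V" and hm: "has_mono_edge E (C0 r n V E \<sigma>)" by auto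
  show "\<sigma> \<in> Bad \<union> (\<Union>k\<in>{1..r}. \<Union>e\<in>E. CA k e) \<union>
    (\<Union>k\<in>{2..r}. \<Union>l\<in>{1..<k}. \<Union>es\<in>PiE {0..l} (\<lambda>_. E). \<Union>ss\<in>PiE {1..l} (\<lambda>_. {..<m}). BV m k l es ss)"
  proof (cases "\<sigma> \<in> Bad")
    case True then show ?thesis by (intro UnI1)
  next
    case False
    then have sv: "\<forall>v\<in>V. 0 \<le> \<sigma> v \<and> \<sigma> v < 1" using sp unfolding Bad_def by auto
    have alg: "alg1_output r n V E \<sigma> (C0 r n V E \<sigma>)" using C0_spec[OF finV EV sv] .
    interpret cs: colsetup r n V E \<sigma> "C0 r n V E \<sigma>"
      by unfold_locales (use finV EV sv inj alg in auto)
    obtain e k where eE: "e \<in> E" and mono: "\<forall>u\<in>e. C0 r n V E \<sigma> u = k"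
      using hm unfolding has_mono_edge_def by blast
    have "card e = n" using Ecard eE by blast
    then have ne: "e \<noteq> {}" using n2 by auto
    from cs.mono_cases[OF eE ne mono] show ?thesis
    proof (elim disjE exE conjE bexE)
      fix k' assume "k' \<in> {1..r}" "\<forall>u\<in>e. \<sigma> u \<in> BigI r n k'"
      then have "\<sigma> \<in> CA k' e" using sp unfolding CA_def by blast
      then have "\<sigma> \<in> (\<Union>e\<in>E. CA k' e)" using eE by (rule UN_I[rotated])
      then have "\<sigma> \<in> (\<Union>k\<in>{1..r}. \<Union>e\<in>E. CA k e)" using \<open>k' \<in> {1..r}\<close> by (rule UN_I[rotated])
      then show ?thesis by (intro UnI1 UnI2)
    next
      fix k' l es W assume k': "2 \<le> k'" "k' \<le> r" and l: "1 \<le> l" "l < k'" and ch0: "chainP r n E \<sigma> k' l es W"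
      have ch: "chainP r n E \<sigma> k' l (restrict es {0..l}) W" using chainP_restrict[OF ch0] .
      have val: "validc E l (restrict es {0..l})" using cs.chain_valid(1)[OF ch k'(2) l] .
      obtain ss where ss: "ss \<in> PiE {1..l} (\<lambda>_. {..<m})" and inb: "\<sigma> \<in> boxc V r n m k' l (restrict es {0..l}) ss"
        using cs.chain_in_box[OF ch k'(2) l m sp] by blast
      have esP: "restrict es {0..l} \<in> PiE {0..l} (\<lambda>_. E)"
        using ch unfolding chainP_def by auto
      have "\<sigma> \<in> BV m k' l (restrict es {0..l}) ss" using inb val unfolding BV_def by simp
      then have "\<sigma> \<in> (\<Union>ss\<in>PiE {1..l} (\<lambda>_. {..<m}). BV m k' l (restrict es {0..l}) ss)" using ss by (rule UN_I[rotated])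
      then have "\<sigma> \<in> (\<Union>es\<in>PiE {0..l} (\<lambda>_. E). \<Union>ss\<in>PiE {1..l} (\<lambda>_. {..<m}). BV m k' l es ss)" using esP by (rule UN_I[rotated])
      moreover have "l \<in> {1..<k'}" using l by simp
      ultimately have "\<sigma> \<in> (\<Union>l\<in>{1..<k'}. \<Union>es\<in>PiE {0..l} (\<lambda>_. E). \<Union>ss\<in>PiE {1..l} (\<lambda>_. {..<m}). BV m k' l es ss)" by (rule UN_I[rotated])
      moreover have "k' \<in> {2..r}" using k' by simp
      ultimately have "\<sigma> \<in> (\<Union>k\<in>{2..r}. \<Union>l\<in>{1..<k}. \<Union>es\<in>PiE {0..l} (\<lambda>_. E). \<Union>ss\<in>PiE {1..l} (\<lambda>_. {..<m}). BV m k l es ss)" by (rule UN_I[rotated])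
      then show ?thesis by (rule UnI2)
    qed
  qed
qed

end

lemma UN_bound:
  assumes "finite I" "\<And>i. i \<in> I \<Longrightarrow> X i \<in> sets M" "\<And>i. i \<in> I \<Longrightarrow> measure M (X i) \<le> c i"
  shows "(\<Union>i\<in>I. X i) \<in> sets M \<and> measure M (\<Union>i\<in>I. X i) \<le> (\<Sum>i\<in>I. c i)"
proof
  show "(\<Union>i\<in>I. X i) \<in> sets M" using assms(1,2) by (rule sets.finite_UN)
  have "measure M (\<Union>i\<in>I. X i) \<le> (\<Sum>i\<in>I. measure M (X i))" using assms(1,2) by (rule measure_UNION_le)
  also have "\<dots> \<le> (\<Sum>i\<in>I. c i)" using assms(3) by (rule sum_mono)
  finally show "measure M (\<Union>i\<in>I. X i) \<le> (\<Sum>i\<in>I. c i)" .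
qed

lemma geom_bound:
  fixes Z :: real
  assumes "0 \<le> Z" "Z \<le> 1/2" "1 \<le> k"
  shows "(\<Sum>l\<in>{1..<k}. Z ^ l) \<le> 2 * Z - 2 * Z ^ k"
  using assms(3)
proof (induction k rule: dec_induct)
  case base then show ?case by simp
next
  case (step k)
  have "(\<Sum>l\<in>{1..<Suc k}. Z ^ l) = (\<Sum>l\<in>{1..<k}. Z ^ l) + Z ^ k" using step.hyps by simp
  also have "\<dots> \<le> 2 * Z - 2 * Z ^ k + Z ^ k" using step.IH by simp
  also have "\<dots> \<le> 2 * Z - 2 * Z ^ Suc k"
  proof -
    have "Z ^ Suc k = Z * Z ^ k" by simp
    moreover have "Z * Z ^ k \<le> (1/2) * Z ^ k" using assms by (intro mult_right_mono) simp_all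
    ultimately show ?thesis by simp
  qed
  finally show ?case .
qed

context hyp
begin

lemma Bad_null: "Bad \<in> sets (weight_space V) \<and> measure (weight_space V) Bad = 0"
proof -
  have eq: "Bad = (\<Union>v\<in>V. {\<sigma> \<in> space (weight_space V). \<forall>t\<in>{()}. \<forall>u\<in>(\<lambda>_. {v}) t. \<sigma> u \<in> (\<lambda>_. - {0..<1::real}) t})"
    unfolding Bad_def by auto
  have b: "- {0..<1::real} \<in> sets borel" by simp
  have z: "measure UU (- {0..<1}) = 0" by simp
  have "(\<Union>v\<in>V. {\<sigma> \<in> space (weight_space V). \<forall>t\<in>{()}. \<forall>u\<in>(\<lambda>_. {v}) t. \<sigma> u \<in> (\<lambda>_. - {0..<1::real}) t}) \<in> sets (weight_space V) \<and>
    measure (weight_space V) (\<Union>v\<in>V. {\<sigma> \<in> space (weight_space V). \<forall>t\<in>{()}. \<forall>u\<in>(\<lambda>_. {v}) t. \<sigma> u \<in> (\<lambda>_. - {0..<1::real}) t}) \<le> (\<Sum>v\<in>V. 0)"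
  proof (rule UN_bound[OF finV])
    fix v assume "v \<in> V"
    then have h1: "finite {()}" "\<forall>t\<in>{()}. (\<lambda>_. {v}) t \<subseteq> V" "\<forall>s\<in>{()}. \<forall>t\<in>{()}. s \<noteq> t \<longrightarrow> (\<lambda>_. {v}) s \<inter> (\<lambda>_. {v}) t = {}"
      "\<forall>t\<in>{()}. (\<lambda>_. - {0..<1::real}) t \<in> sets borel" using b by auto
    note BM = box_measure[OF finV h1]
    show "{\<sigma> \<in> space (weight_space V). \<forall>t\<in>{()}. \<forall>u\<in>(\<lambda>_. {v}) t. \<sigma> u \<in> (\<lambda>_. - {0..<1::real}) t} \<in> sets (weight_space V)"
      using BM(1) .
    show "measure (weight_space V) {\<sigma> \<in> space (weight_space V). \<forall>t\<in>{()}. \<forall>u\<in>(\<lambda>_. {v}) t. \<sigma> u \<in> (\<lambda>_. - {0..<1::real}) t} \<le> 0"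
      using BM(2) z by simp
  qed
  then show ?thesis unfolding eq[symmetric] using measure_nonneg[of "weight_space V" Bad] by simp
qed

lemma measure_bound:
  assumes m: "m \<ge> 1"
  defines "H \<equiv> \<lambda>l. hh r n m ^ l * a ^ ((l + 1) * n - 2 * l) * exp (real n * (real l * (b + hh r n m)) / a)"
  shows "measure (weight_space V) {\<sigma> \<in> space (weight_space V). inj_on \<sigma> V \<and> has_mono_edge E (C0 r n V E \<sigma>)}
     \<le> real r * (real (card E) * a ^ n) +
       (\<Sum>k\<in>{2..r}. \<Sum>l\<in>{1..<k}. real (card E) ^ (l + 1) * real m ^ l * H l)"
proof -
  interpret P: prob_space "weight_space V" by (rule ws_prob)
  have finE: "finite E"
  proof -
    have "E \<subseteq> Pow V" using Ecard by blast
    then show ?thesis using finV by (meson finite_Pow_iff finite_subset)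
  qed
  let ?U1 = "\<Union>k\<in>{1..r}. \<Union>e\<in>E. CA k e"
  let ?U2 = "\<Union>k\<in>{2..r}. \<Union>l\<in>{1..<k}. \<Union>es\<in>PiE {0..l} (\<lambda>_. E). \<Union>ss\<in>PiE {1..l} (\<lambda>_. {..<m}). BV m k l es ss"
  have U1: "?U1 \<in> sets (weight_space V) \<and> measure (weight_space V) ?U1 \<le> (\<Sum>k\<in>{1..r}. \<Sum>e\<in>E. a ^ n)"
  proof (rule UN_bound)
    fix k assume "k \<in> {1..r}"
    have "(\<Union>e\<in>E. CA k e) \<in> sets (weight_space V) \<and> measure (weight_space V) (\<Union>e\<in>E. CA k e) \<le> (\<Sum>e\<in>E. a ^ n)"
      by (rule UN_bound[OF finE]) (use caseA_bound in \<open>auto simp: CA_def\<close>)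
    then show "(\<Union>e\<in>E. CA k e) \<in> sets (weight_space V)" "measure (weight_space V) (\<Union>e\<in>E. CA k e) \<le> (\<Sum>e\<in>E. a ^ n)" by auto
  qed simp
  have Hnn: "0 \<le> H l" for l unfolding H_def using a_pos hh_pos[OF m] by simp
  have L4: "(\<Union>ss\<in>PiE {1..l} (\<lambda>_. {..<m}). BV m k l es ss) \<in> sets (weight_space V) \<and>
          measure (weight_space V) (\<Union>ss\<in>PiE {1..l} (\<lambda>_. {..<m}). BV m k l es ss) \<le> (\<Sum>ss\<in>PiE {1..l} (\<lambda>_. {..<m}). H l)"
    if k: "k \<in> {2..r}" and l: "l \<in> {1..<k}" for k l es
  proof (rule UN_bound)
    fix ss assume ss: "ss \<in> PiE {1..l} (\<lambda>_. {..<m})"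
    have k2: "2 \<le> k" "k \<le> r" using k by auto
    have l2: "1 \<le> l" "l < k" using l by auto
    show "BV m k l es ss \<in> sets (weight_space V)"
    proof (cases "validc E l es")
      case True then show ?thesis using box_bound(1)[OF True k2 l2 m ss] unfolding BV_def by simp
    qed (simp add: BV_def)
    show "measure (weight_space V) (BV m k l es ss) \<le> H l"
    proof (cases "validc E l es")
      case True then show ?thesis using box_bound(2)[OF True k2 l2 m ss] unfolding BV_def H_def by simp
    qed (simp add: BV_def Hnn)
  qed (simp add: finite_PiE)
  have L3: "(\<Union>es\<in>PiE {0..l} (\<lambda>_. E). \<Union>ss\<in>PiE {1..l} (\<lambda>_. {..<m}). BV m k l es ss) \<in> sets (weight_space V) \<and>
        measure (weight_space V) (\<Union>es\<in>PiE {0..l} (\<lambda>_. E). \<Union>ss\<in>PiE {1..l} (\<lambda>_. {..<m}). BV m k l es ss)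
        \<le> (\<Sum>es\<in>PiE {0..l} (\<lambda>_. E). \<Sum>ss\<in>PiE {1..l} (\<lambda>_. {..<m}). H l)"
    if k: "k \<in> {2..r}" and l: "l \<in> {1..<k}" for k l
    by (rule UN_bound) (use L4[OF k l] finE in \<open>auto simp: finite_PiE\<close>)
  have L2: "(\<Union>l\<in>{1..<k}. \<Union>es\<in>PiE {0..l} (\<lambda>_. E). \<Union>ss\<in>PiE {1..l} (\<lambda>_. {..<m}). BV m k l es ss) \<in> sets (weight_space V) \<and>
      measure (weight_space V) (\<Union>l\<in>{1..<k}. \<Union>es\<in>PiE {0..l} (\<lambda>_. E). \<Union>ss\<in>PiE {1..l} (\<lambda>_. {..<m}). BV m k l es ss)
      \<le> (\<Sum>l\<in>{1..<k}. \<Sum>es\<in>PiE {0..l} (\<lambda>_. E). \<Sum>ss\<in>PiE {1..l} (\<lambda>_. {..<m}). H l)"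
    if k: "k \<in> {2..r}" for k
    by (rule UN_bound) (use L3[OF k] in auto)
  have U2: "?U2 \<in> sets (weight_space V) \<and> measure (weight_space V) ?U2 \<le>
     (\<Sum>k\<in>{2..r}. \<Sum>l\<in>{1..<k}. \<Sum>es\<in>PiE {0..l} (\<lambda>_. E). \<Sum>ss\<in>PiE {1..l} (\<lambda>_. {..<m}). H l)"
    by (rule UN_bound) (use L2 in auto)
  have Bn: "Bad \<in> sets (weight_space V)" "measure (weight_space V) Bad = 0" using Bad_null by auto
  have "measure (weight_space V) {\<sigma> \<in> space (weight_space V). inj_on \<sigma> V \<and> has_mono_edge E (C0 r n V E \<sigma>)}
      \<le> measure (weight_space V) (Bad \<union> ?U1 \<union> ?U2)"
    by (rule P.finite_measure_mono[OF inclusion[OF m]]) (use Bn U1 U2 in auto)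
  also have "\<dots> \<le> measure (weight_space V) (Bad \<union> ?U1) + measure (weight_space V) ?U2"
    by (rule measure_Un_le) (use Bn U1 U2 in auto)
  also have "measure (weight_space V) (Bad \<union> ?U1) \<le> measure (weight_space V) Bad + measure (weight_space V) ?U1"
    by (rule measure_Un_le) (use Bn U1 in auto)
  finally have main: "measure (weight_space V) {\<sigma> \<in> space (weight_space V). inj_on \<sigma> V \<and> has_mono_edge E (C0 r n V E \<sigma>)}
      \<le> (\<Sum>k\<in>{1..r}. \<Sum>e\<in>E. a ^ n) + (\<Sum>k\<in>{2..r}. \<Sum>l\<in>{1..<k}. \<Sum>es\<in>PiE {0..l} (\<lambda>_. E). \<Sum>ss\<in>PiE {1..l} (\<lambda>_. {..<m}). H l)"
    using U1 U2 Bn by linarith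
  have s1: "(\<Sum>k\<in>{1..r}. \<Sum>e\<in>E. a ^ n) = real r * (real (card E) * a ^ n)" by simp
  have s2: "(\<Sum>es\<in>PiE {0..l} (\<lambda>_. E). \<Sum>ss\<in>PiE {1..l} (\<lambda>_. {..<m}). H l) = real (card E) ^ (l + 1) * real m ^ l * H l" for l
  proof -
    have "card (PiE {0..l} (\<lambda>_. E)) = card E ^ (l + 1)" by (simp add: card_PiE)
    moreover have "card (PiE {1..l} (\<lambda>_. {..<m})) = m ^ l" by (simp add: card_PiE)
    ultimately show ?thesis by simp
  qed
  show ?thesis using main unfolding s1 s2 .
qed

end

context hyp
begin

lemma numeric_final:
  defines "L \<equiv> ln (real n / ln (real n))"
  assumes L0: "0 < L" and Lln: "L \<le> ln (real n)" and lnpos: "0 < ln (real n)"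
    and p4: "pcol r n \<le> 1/4"
    and d1: "L * (1 / real n + pcol r n) / (1 - pcol r n) \<le> 1"
    and Eb: "real (card E) \<le> 0.01 * (real n / ln (real n)) powr ((real r - 1) / real r) * real r ^ (n - 1)"
  shows "measure (weight_space V) {\<sigma> \<in> space (weight_space V). inj_on \<sigma> V \<and> has_mono_edge E (C0 r n V E \<sigma>)}
     \<le> 0.04 * exp 1"
proof -
  let ?p = "pcol r n"
  let ?E = "real (card E)"
  let ?h = "hh r n n"
  have n1: "n \<ge> 1" using n2 by simp
  have rr: "real r \<ge> 2" using r2 by simp
  have pdef: "?p = (real r - 1) / real r * L / real n" unfolding pcol_def L_def ..
  have p0: "0 < ?p" using p_pos .
  have hdef: "?h = b / real n" unfolding hh_def ..
  have adef: "a = (1 - ?p) / real r" unfolding aa_def ..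
  have bdef: "b = ?p / (real r - 1)" unfolding bb_def ..
  have Q0: "0 < real n / ln (real n)" using lnpos n1 by simp
  have expL: "exp L = real n / ln (real n)" unfolding L_def using Q0 by simp
  have pn: "?p * real n = (real r - 1) / real r * L" unfolding pdef using n1 by simp
  have Qpow: "(real n / ln (real n)) powr ((real r - 1) / real r) = exp (?p * real n)"
  proof -
    have "(real n / ln (real n)) powr ((real r - 1) / real r) = exp ((real r - 1) / real r * L)"
      unfolding powr_def L_def using Q0 n1 lnpos by (simp add: mult.commute)
    then show ?thesis using pn by simp
  qed
  have Eb2: "?E \<le> 0.01 * exp (?p * real n) * real r ^ (n - 1)" using Eb unfolding Qpow .
  have E0: "0 \<le> ?E" by simp
  have onep: "(1 - ?p) ^ n \<le> exp (- (?p * real n))"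
  proof -
    have "1 - ?p \<le> exp (- ?p)" using exp_ge_add_one_self[of "- ?p"] by simp
    then have "(1 - ?p) ^ n \<le> exp (- ?p) ^ n" using p4 by (intro power_mono) simp_all
    also have "\<dots> = exp (- (?p * real n))" by (simp add: exp_of_nat_mult[symmetric] algebra_simps)
    finally show ?thesis .
  qed
  have ep: "exp (?p * real n) * (1 - ?p) ^ n \<le> 1"
  proof -
    have "exp (?p * real n) * (1 - ?p) ^ n \<le> exp (?p * real n) * exp (- (?p * real n))"
      using onep by (intro mult_left_mono) simp_all
    also have "\<dots> = 1" by (simp add: exp_minus_inverse)
    finally show ?thesis .
  qed
  have "\<exists>n'. n = Suc (Suc n')" using n2 by presburger
  then obtain n' where nn: "n = Suc (Suc n')" by blast
  have rpow: "real r * real r ^ (n - 1) = real r ^ n" unfolding nn by simp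
  define Y where "Y = ?E * a ^ n"
  have Y0: "0 \<le> Y" unfolding Y_def using a_pos by simp
  have rY: "real r * Y \<le> 0.01"
  proof -
    have an: "a ^ n = (1 - ?p) ^ n / real r ^ n" unfolding adef by (simp add: power_divide)
    have "real r * Y \<le> real r * (0.01 * exp (?p * real n) * real r ^ (n - 1) * a ^ n)"
      unfolding Y_def using Eb2 a_pos rr by (intro mult_left_mono mult_right_mono) simp_all
    also have "\<dots> = 0.01 * exp (?p * real n) * (real r * real r ^ (n - 1)) * a ^ n" by (simp add: algebra_simps)
    also have "\<dots> = 0.01 * (exp (?p * real n) * (1 - ?p) ^ n)" unfolding rpow an using rr by simp
    also have "\<dots> \<le> 0.01" using ep by simp
    finally show ?thesis .
  qed
  define Z where "Z = ?E * b * a ^ (n - 2) * exp (real n * (b + ?h) / a)"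
  have Z0: "0 \<le> Z" unfolding Z_def using a_pos b_pos by simp
  have Zb: "Z \<le> 1/2"
  proof -
    have a2: "a ^ (n - 2) = (1 - ?p) ^ (n - 2) / real r ^ (n - 2)" unfolding adef by (simp add: power_divide)
    have rpow2: "real r ^ (n - 1) = real r * real r ^ (n - 2)"
      unfolding nn by simp
    have pp: "(1 - ?p) ^ (n - 2) * (1 - ?p) ^ 2 = (1 - ?p) ^ n"
      unfolding nn by (simp add: power2_eq_square)
    have q1: "0 < 1 - ?p" using p4 by simp
    have ep2: "exp (?p * real n) * (1 - ?p) ^ (n - 2) \<le> 1 / (1 - ?p) ^ 2"
    proof -
      have "exp (?p * real n) * (1 - ?p) ^ (n - 2) * (1 - ?p) ^ 2 \<le> 1" using ep unfolding pp[symmetric] by (simp add: mult.assoc)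
      then show ?thesis using q1 by (simp add: field_simps)
    qed
    have rb: "real r * b = L / real n"
      unfolding bdef pdef using rr n1 by (simp add: field_simps)
    have ex: "real n * (b + ?h) / a = L + L * (1 / real n + ?p) / (1 - ?p)"
    proof -
      have "real n * (b + ?h) / a = (real n + 1) * (real r * b) / (1 - ?p)"
        unfolding hdef adef using n1 rr q1 by (simp add: field_simps)
      also have "\<dots> = (real n + 1) * L / (real n * (1 - ?p))" unfolding rb using n1 q1 by (simp add: field_simps)
      also have "\<dots> = L + L * (1 / real n + ?p) / (1 - ?p)" using n1 q1 by (simp add: field_simps)
      finally show ?thesis .
    qed
    have ex2: "exp (real n * (b + ?h) / a) \<le> real n / ln (real n) * exp 1"
    proof -
      have "exp (real n * (b + ?h) / a) \<le> exp (L + 1)" unfolding ex using d1 by simp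
      also have "\<dots> = exp L * exp 1" by (simp add: exp_add)
      finally show ?thesis unfolding expL .
    qed
    have "Z \<le> (0.01 * exp (?p * real n) * real r ^ (n - 1)) * b * a ^ (n - 2) * exp (real n * (b + ?h) / a)"
      unfolding Z_def using Eb2 a_pos b_pos by (intro mult_right_mono) simp_all
    also have "\<dots> = 0.01 * (exp (?p * real n) * (1 - ?p) ^ (n - 2)) * (real r * b) * exp (real n * (b + ?h) / a)"
      unfolding a2 rpow2 using rr by (simp add: field_simps)
    also have "\<dots> \<le> 0.01 * (1 / (1 - ?p) ^ 2) * (L / real n) * (real n / ln (real n) * exp 1)"
      unfolding rb using ep2 ex2 L0 n1 by (intro mult_mono mult_left_mono) simp_all
    also have "\<dots> = 0.01 * exp 1 * (L / ln (real n)) / (1 - ?p) ^ 2" using n1 by (simp add: field_simps)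
    also have "\<dots> \<le> 0.01 * 3 * 1 / (9/16)"
    proof -
      have "L / ln (real n) \<le> 1" using Lln lnpos by simp
      moreover have "9/16 \<le> (1 - ?p) ^ 2"
      proof -
        have "3/4 \<le> 1 - ?p" using p4 by simp
        then have "(3/4) ^ 2 \<le> (1 - ?p) ^ 2" by (intro power_mono) simp_all
        then show ?thesis by (simp add: power2_eq_square)
      qed
      moreover have "0 \<le> L / ln (real n)" using L0 lnpos by simp
      ultimately show ?thesis using exp_le L0 lnpos by (intro divide_mono mult_mono) simp_all
    qed
    also have "\<dots> \<le> 1/2" by simp
    finally show ?thesis .
  qed
  have MB: "measure (weight_space V) {\<sigma> \<in> space (weight_space V). inj_on \<sigma> V \<and> has_mono_edge E (C0 r n V E \<sigma>)}
     \<le> real r * (?E * a ^ n) +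
       (\<Sum>k\<in>{2..r}. \<Sum>l\<in>{1..<k}. ?E ^ (l + 1) * real n ^ l * (?h ^ l * a ^ ((l + 1) * n - 2 * l) * exp (real n * (real l * (b + ?h)) / a)))"
    using measure_bound[OF n1] by simp
  have termeq: "?E ^ (l + 1) * real n ^ l * (?h ^ l * a ^ ((l + 1) * n - 2 * l) * exp (real n * (real l * (b + ?h)) / a)) = Y * Z ^ l" for l
  proof -
    have e1: "(l + 1) * n - 2 * l = n + (n - 2) * l" using n2 by (simp add: algebra_simps diff_mult_distrib2)
    have e2: "real n * ?h = b" unfolding hdef using n1 by simp
    have e3: "exp (real n * (real l * (b + ?h)) / a) = exp (real n * (b + ?h) / a) ^ l"
      by (simp add: exp_of_nat_mult[symmetric] algebra_simps)
    have "?E ^ (l + 1) * real n ^ l * (?h ^ l * a ^ ((l + 1) * n - 2 * l) * exp (real n * (real l * (b + ?h)) / a))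
       = ?E * ?E ^ l * (real n * ?h) ^ l * (a ^ n * (a ^ (n - 2)) ^ l) * exp (real n * (b + ?h) / a) ^ l"
    proof -
      have e4: "a ^ ((l + 1) * n - 2 * l) = a ^ n * (a ^ (n - 2)) ^ l" unfolding e1 power_add power_mult ..
      show ?thesis unfolding e4 e3 power_mult_distrib by (simp add: mult_ac)
    qed
    also have "\<dots> = Y * Z ^ l" unfolding e2 Y_def Z_def by (simp add: power_mult_distrib algebra_simps)
    finally show ?thesis .
  qed
  have S: "(\<Sum>k\<in>{2..r}. \<Sum>l\<in>{1..<k}. Y * Z ^ l) \<le> real r * Y * (2 * Z)"
  proof -
    have "(\<Sum>k\<in>{2..r}. \<Sum>l\<in>{1..<k}. Y * Z ^ l) \<le> (\<Sum>k\<in>{2..r}. Y * (2 * Z))"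
    proof (rule sum_mono)
      fix k assume k: "k \<in> {2..r}"
      have "(\<Sum>l\<in>{1..<k}. Y * Z ^ l) = Y * (\<Sum>l\<in>{1..<k}. Z ^ l)" by (simp add: sum_distrib_left)
      also have "\<dots> \<le> Y * (2 * Z)"
      proof (rule mult_left_mono[OF _ Y0])
        have "(\<Sum>l\<in>{1..<k}. Z ^ l) \<le> 2 * Z - 2 * Z ^ k" using geom_bound[OF Z0 Zb] k by simp
        also have "\<dots> \<le> 2 * Z" using Z0 by simp
        finally show "(\<Sum>l\<in>{1..<k}. Z ^ l) \<le> 2 * Z" .
      qed
      finally show "(\<Sum>l\<in>{1..<k}. Y * Z ^ l) \<le> Y * (2 * Z)" .
    qed
    also have "\<dots> = real (r - 1) * (Y * (2 * Z))" using r2 by simp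
    also have "\<dots> \<le> real r * (Y * (2 * Z))" using Y0 Z0 by (intro mult_right_mono) simp_all
    finally show ?thesis by (simp add: mult.assoc)
  qed
  have "measure (weight_space V) {\<sigma> \<in> space (weight_space V). inj_on \<sigma> V \<and> has_mono_edge E (C0 r n V E \<sigma>)}
     \<le> real r * Y + real r * Y * (2 * Z)"
    using MB S unfolding termeq Y_def by simp
  also have "\<dots> \<le> 0.01 + 0.01 * (2 * (1/2))"
    using rY Zb Z0 Y0 rr by (intro add_mono mult_mono) simp_all
  also have "\<dots> \<le> 0.04 * exp 1"
  proof -
    have "2 \<le> exp (1::real)" using exp_ge_add_one_self[of 1] by simp
    then show ?thesis by simp
  qed
  finally show ?thesis .
qed

end

lemma ln_small:
  fixes x :: real
  assumes x: "16384 \<le> x"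
  shows "ln x * (1 + ln x) \<le> x / 4" and "1 \<le> ln x"
proof -
  have x0: "0 < x" using x by simp
  show l1: "1 \<le> ln x"
  proof -
    have "exp 1 \<le> x" using exp_le x by simp
    then show ?thesis using x0 by (simp add: ln_ge_iff)
  qed
  have q0: "0 < x powr (1/4)" using x0 by simp
  have "ln (x powr (1/4)) \<le> x powr (1/4) - 1" using ln_le_minus_one[OF q0] .
  then have lq: "ln x \<le> 4 * x powr (1/4)" using x0 by (simp add: ln_powr)
  have sq: "x powr (1/4) * x powr (1/4) = sqrt x"
    using x0 by (simp add: powr_add[symmetric] powr_half_sqrt[symmetric])
  have "ln x * (1 + ln x) \<le> ln x * (2 * ln x)" using l1 by (intro mult_left_mono) simp_all
  also have "\<dots> = 2 * (ln x * ln x)" by simp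
  also have "\<dots> \<le> 2 * ((4 * x powr (1/4)) * (4 * x powr (1/4)))"
    using lq l1 by (intro mult_left_mono mult_mono) simp_all
  also have "\<dots> = 32 * sqrt x" using sq by simp
  also have "\<dots> \<le> x / 4"
  proof -
    have "sqrt 16384 \<le> sqrt x" using x by (rule real_sqrt_le_mono)
    moreover have "sqrt (16384::real) = 128"
    proof -
      have "(16384::real) = 128\<^sup>2" by simp
      then show ?thesis by simp
    qed
    ultimately have s: "128 \<le> sqrt x" by simp
    have "32 * sqrt x = sqrt x * 128 / 4" by simp
    also have "\<dots> \<le> sqrt x * sqrt x / 4" using s x0 by (intro divide_right_mono mult_left_mono) simp_all
    also have "\<dots> = x / 4" using x0 by simp
    finally show ?thesis .
  qed
  finally show "ln x * (1 + ln x) \<le> x / 4" .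
qed

theorem lemma3:
  shows "\<exists>N::nat. \<forall>n r (V::nat set) (E::nat set set).
    n \<ge> N \<and> 2 \<le> r \<and> real r < root 5 (ln (real n)) \<and>
    finite V \<and> E \<subseteq> {e. e \<subseteq> V \<and> card e = n} \<and>
    real (card E) \<le> 0.01 * (real n / ln (real n)) powr ((real r - 1) / real r) * real r ^ (n - 1)
    \<longrightarrow>
    (let A = {\<sigma> \<in> space (weight_space V). inj_on \<sigma> V \<and> has_mono_edge E (C0 r n V E \<sigma>)}
     in A \<in> sets (weight_space V) \<and> measure (weight_space V) A \<le> 0.04 * exp 1)"
proof (intro exI[of _ 16384] allI impI)
  fix n r :: nat and V :: "nat set" and E :: "nat set set"
  assume H: "16384 \<le> n \<and> 2 \<le> r \<and> real r < root 5 (ln (real n)) \<and>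
    finite V \<and> E \<subseteq> {e. e \<subseteq> V \<and> card e = n} \<and>
    real (card E) \<le> 0.01 * (real n / ln (real n)) powr ((real r - 1) / real r) * real r ^ (n - 1)"
  then have nN: "16384 \<le> n" and r2: "2 \<le> r" and finV: "finite V" and EV: "E \<subseteq> {e. e \<subseteq> V \<and> card e = n}"
    and Eb: "real (card E) \<le> 0.01 * (real n / ln (real n)) powr ((real r - 1) / real r) * real r ^ (n - 1)"
    by auto
  have xN: "16384 \<le> real n" using nN by simp
  note LS = ln_small[OF xN]
  define L where "L = ln (real n / ln (real n))"
  have n0: "0 < real n" using nN by simp
  have lnpos: "0 < ln (real n)" using LS(2) by simp
  have lnn: "ln (real n) < real n" using n0 by (rule ln_less_self)
  have Q1: "1 < real n / ln (real n)" using lnn lnpos by simp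
  have L0: "0 < L" unfolding L_def using Q1 by simp
  have Lln: "L \<le> ln (real n)"
  proof -
    have "real n / ln (real n) \<le> real n" using LS(2) n0 by (simp add: divide_le_eq)
    then show ?thesis unfolding L_def using Q1 by simp
  qed
  have lnn4: "ln (real n) \<le> real n / 4"
  proof -
    have "ln (real n) \<le> ln (real n) * (1 + ln (real n))" using LS(2) by simp
    then show ?thesis using LS(1) by linarith
  qed
  have pdef: "pcol r n = (real r - 1) / real r * L / real n" unfolding pcol_def L_def ..
  have rr: "0 < (real r - 1) / real r" "(real r - 1) / real r \<le> 1" using r2 by simp_all
  have pleL: "pcol r n \<le> L / real n"
  proof -
    have "(real r - 1) / real r * L \<le> 1 * L" using rr L0 by (intro mult_right_mono) simp_all
    then have h: "(real r - 1) / real r * L \<le> L" by simp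
    show ?thesis unfolding pdef by (rule divide_right_mono[OF h]) (use n0 in simp)
  qed
  have pleln: "pcol r n \<le> ln (real n) / real n"
    using pleL Lln n0 by (meson divide_right_mono less_imp_le order_trans)
  have p4: "pcol r n \<le> 1/4"
  proof -
    have "ln (real n) / real n \<le> 1/4" using lnn4 n0 by (simp add: divide_le_eq)
    then show ?thesis using pleln by linarith
  qed
  have ppos: "0 < pcol r n" unfolding pdef using rr L0 n0 r2 by (intro divide_pos_pos mult_pos_pos) simp_all
  have d1: "L * (1 / real n + pcol r n) / (1 - pcol r n) \<le> 1"
  proof -
    have a1: "1 / real n + pcol r n \<le> (1 + ln (real n)) / real n" using pleln n0 by (simp add: add_divide_distrib)
    have "L * (1 / real n + pcol r n) \<le> ln (real n) * ((1 + ln (real n)) / real n)"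
      using Lln a1 L0 ppos n0 by (intro mult_mono) simp_all
    also have "\<dots> = ln (real n) * (1 + ln (real n)) / real n" by simp
    also have "\<dots> \<le> 1/4" using LS(1) n0 by (simp add: divide_le_eq)
    finally have "L * (1 / real n + pcol r n) \<le> 1/4" .
    moreover have "3/4 \<le> 1 - pcol r n" using p4 by simp
    ultimately have "L * (1 / real n + pcol r n) \<le> 1 - pcol r n" by linarith
    moreover have "0 < 1 - pcol r n" using p4 by simp
    ultimately show ?thesis by (simp add: divide_le_eq)
  qed
  interpret hyp r n V E
  proof
    show "2 \<le> r" by (rule r2)
    show "0 < pcol r n" by (rule ppos)
    show "pcol r n < 1" using p4 by simp
    show "finite V" by (rule finV)
    show "\<forall>e\<in>E. e \<subseteq> V \<and> card e = n" using EV by blast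
    show "2 \<le> n" using nN by simp
  qed
  have meas: "{\<sigma> \<in> space (weight_space V). inj_on \<sigma> V \<and> has_mono_edge E (C0 r n V E \<sigma>)} \<in> sets (weight_space V)"
    using A_meas[OF finV] EV by blast
  have bound: "measure (weight_space V) {\<sigma> \<in> space (weight_space V). inj_on \<sigma> V \<and> has_mono_edge E (C0 r n V E \<sigma>)} \<le> 0.04 * exp 1"
    using numeric_final[OF L0[unfolded L_def] Lln[unfolded L_def] lnpos p4 d1[unfolded L_def] Eb] .
  show "let A = {\<sigma> \<in> space (weight_space V). inj_on \<sigma> V \<and> has_mono_edge E (C0 r n V E \<sigma>)}
     in A \<in> sets (weight_space V) \<and> measure (weight_space V) A \<le> 0.04 * exp 1"
    using meas bound by simp
qed

end
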